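(* Fix integers $\Lambda\ge1$, $\lambda\in\{1,\dots,\Lambda\}$, $K\ge1$ and $N\ge K$, and consider the ensemble $\mathcal B_\lambda$ of all connectivities in which each of the $K$ users is connected to exactly $\lambda$ of the $\Lambda$ caches, all connectivities being equiprobable. Under a fixed uncoded cache placement (common to all connectivities), the optimal average worst-case load satisfies $R^\star_{\text{avg},\mathcal B_\lambda}(M)\ge R_{\text{avg},\mathcal B_\lambda,\text{LB}}(M)$ for all $M\in[0, N(\Lambda-\lambda+1)/\Lambda]$, where $R_{\text{avg},\mathcal B_\lambda,\text{LB}}$ is the piecewise linear curve with corner points \[ \left(t\frac{N}{\Lambda},\ \frac{K\binom{\Lambda}{t+\lambda}}{\binom{\Lambda}{\lambda}\binom{\Lambda}{t}}+A_t\right),\qquad t\in\{0,1,\dots,\Lambda-\lambda+1\}, \] with \[ A_t=\frac{K}{|\mathcal B_\lambda|}\binom{\Lambda-t}{\lambda}\left(1-\frac{1}{\binom{t+\lambda}{\lambda}}\right),\qquad |\mathcal B_\lambda|=\binom{K+\binom{\Lambda}{\lambda}-1}{K}. \]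
   Context: Multi-access coded caching model: a server holds $N$ files $W_1,\dots,W_N$ of $B$ bits each; $\Lambda$ caches, each storing $MB$ bits; $K$ users, $N\ge K$. Each user $u$ is connected to a subset $\mathcal U_u\subseteq[\Lambda]$ of caches and can read their full contents. A connectivity is identified, up to permutation of users, with the vector $(K_{\mathcal U}:\mathcal U\subseteq[\Lambda])$ of non-negative integers summing to $K$, where $K_{\mathcal U}$ is the number of users whose set of connected caches is exactly $\mathcal U$. $\mathcal B_\lambda$ is the set of all such vectors supported on subsets of size exactly $\lambda$ (so $|\mathcal B_\lambda|=\binom{K+\binom{\Lambda}{\lambda}-1}{K}$). Uncoded placement: each file $W_n$ is partitioned into disjoint subfiles $W_{n,\mathcal T}$, $\mathcal T\subseteq[\Lambda]$, and cache $\ell$ stores exactly the $W_{n,\mathcal T}$ with $\ell\in\mathcal T$, at most $MB$ bits per cache. Delivery: each user requests a file index; the server broadcasts an error-free message $X$ depending on the library and demands; each user must decode its requested file from $X$ and its connected caches. For a placement $P$ and a connectivity $b$, $R_b(P)$ is the minimum over delivery schemes (designed with knowledge of $b$) of the worst-case (over demand vectors) value of $|X|/B$. The optimal average worst-case load over the ensemble is $R^\star_{\text{avg},\mathcal B_\lambda}(M)=\inf_P \frac{1}{|\mathcal B_\lambda|}\sum_{b\in\mathcal B_\lambda}R_b(P)$, the infimum over uncoded placements $P$ of cache size $M$ (the placement is fixed, i.e. chosen without knowledge of the connectivity). A piecewise linear curve with given corner points is the linear interpolation between consecutive points. Convention: $\binom{n}{k}=0$ if $n<0$, $k<0$ or $n<k$.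 *)

theory Defs
  imports Complex_Main "HOL-Library.FuncSet"
begin

(* Indexing conventions: files {..<N}, caches {..<Lam}, users {..<K}, bits of a file {..<B}. *)

type_synonym library = "nat \<Rightarrow> nat \<Rightarrow> bool"   (* file index \<Rightarrow> bit index \<Rightarrow> bit *)

(* a library of N files of B bits each (bits outside the range are fixed to False) *)
definition valid_lib :: "nat \<Rightarrow> nat \<Rightarrow> library \<Rightarrow> bool" where
  "valid_lib N B W \<longleftrightarrow> (\<forall>n i. \<not> (n < N \<and> i < B) \<longrightarrow> W n i = False)"

(* uncoded placement: bit i of file n belongs to subfile W_{n,pl n i}, pl n i \<subseteq> [Lam];
   cache l stores exactly the bits with l \<in> pl n i; at most M*B bits per cache; B \<ge> 1 *)
definition uncoded_placement ::
  "nat \<Rightarrow> nat \<Rightarrow> real \<Rightarrow> nat \<Rightarrow> (nat \<Rightarrow> nat \<Rightarrow> nat set) \<Rightarrow> bool" where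
  "uncoded_placement Lam N M B pl \<longleftrightarrow>
     B > 0 \<and> (\<forall>n<N. \<forall>i<B. pl n i \<subseteq> {..<Lam}) \<and>
     (\<forall>l<Lam. real (card {(n, i). n < N \<and> i < B \<and> l \<in> pl n i}) \<le> M * real B)"

definition cache_view ::
  "nat \<Rightarrow> nat \<Rightarrow> (nat \<Rightarrow> nat \<Rightarrow> nat set) \<Rightarrow> nat set \<Rightarrow> library \<Rightarrow> library" where
  "cache_view N B pl U W =
     (\<lambda>n i. if n < N \<and> i < B \<and> pl n i \<inter> U \<noteq> {} then W n i else False)"

definition demands :: "nat \<Rightarrow> nat \<Rightarrow> (nat \<Rightarrow> nat) set" where
  "demands K N = {..<K} \<rightarrow>\<^sub>E {..<N}"

definition delivery_scheme ::
  "nat \<Rightarrow> nat \<Rightarrow> nat \<Rightarrow> (nat \<Rightarrow> nat \<Rightarrow> nat set) \<Rightarrow> (nat \<Rightarrow> nat set) \<Rightarrow>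
   ((nat \<Rightarrow> nat) \<Rightarrow> library \<Rightarrow> bool list) \<Rightarrow> ((nat \<Rightarrow> nat) \<Rightarrow> nat) \<Rightarrow> bool" where
  "delivery_scheme K N B pl conn enc len \<longleftrightarrow>
     (\<forall>d \<in> demands K N.
        (\<forall>W. valid_lib N B W \<longrightarrow> length (enc d W) = len d) \<and>
        (\<forall>u<K. \<exists>dec :: bool list \<Rightarrow> library \<Rightarrow> nat \<Rightarrow> bool.
            \<forall>W. valid_lib N B W \<longrightarrow>
              (\<forall>i<B. dec (enc d W) (cache_view N B pl (conn u) W) i = W (d u) i)))"

definition load_conn ::
  "nat \<Rightarrow> nat \<Rightarrow> nat \<Rightarrow> (nat \<Rightarrow> nat \<Rightarrow> nat set) \<Rightarrow> (nat \<Rightarrow> nat set) \<Rightarrow> real" where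
  "load_conn K N B pl conn =
     Inf {r. \<exists>enc len. delivery_scheme K N B pl conn enc len \<and>
                      r = real (Max (len ` demands K N)) / real B}"

definition lam_subsets :: "nat \<Rightarrow> nat \<Rightarrow> nat set set" where
  "lam_subsets Lam lam = {U. U \<subseteq> {..<Lam} \<and> card U = lam}"

(* B_lambda: connectivity vectors (K_U)_U supported on lam-subsets, summing to K *)
definition ensemble :: "nat \<Rightarrow> nat \<Rightarrow> nat \<Rightarrow> (nat set \<Rightarrow> nat) set" where
  "ensemble K Lam lam =
     {b. (\<forall>U. U \<notin> lam_subsets Lam lam \<longrightarrow> b U = 0) \<and> sum b (lam_subsets Lam lam) = K}"

definition realizes :: "nat \<Rightarrow> (nat set \<Rightarrow> nat) \<Rightarrow> (nat \<Rightarrow> nat set) \<Rightarrow> bool" where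
  "realizes K b conn \<longleftrightarrow> (\<forall>U. card {u. u < K \<and> conn u = U} = b U)"

(* R_b(P): load for connectivity vector b (well defined up to permutation of users) *)
definition load_vec ::
  "nat \<Rightarrow> nat \<Rightarrow> nat \<Rightarrow> (nat \<Rightarrow> nat \<Rightarrow> nat set) \<Rightarrow> (nat set \<Rightarrow> nat) \<Rightarrow> real" where
  "load_vec K N B pl b = load_conn K N B pl (SOME conn. realizes K b conn)"

definition R_avg_opt :: "nat \<Rightarrow> nat \<Rightarrow> nat \<Rightarrow> nat \<Rightarrow> real \<Rightarrow> real" where
  "R_avg_opt N K Lam lam M =
     Inf {r. \<exists>B pl. uncoded_placement Lam N M B pl \<and>
            r = (\<Sum>b\<in>ensemble K Lam lam. load_vec K N B pl b) / real (card (ensemble K Lam lam))}"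

definition pl_interp :: "(nat \<Rightarrow> real) \<Rightarrow> (nat \<Rightarrow> real) \<Rightarrow> nat \<Rightarrow> real \<Rightarrow> real" where
  "pl_interp x y n m =
     (let t = (LEAST t. t < n \<and> m \<le> x (Suc t))
      in y t + (m - x t) / (x (Suc t) - x t) * (y (Suc t) - y t))"

definition ensemble_size :: "nat \<Rightarrow> nat \<Rightarrow> nat \<Rightarrow> nat" where
  "ensemble_size K Lam lam = (K + (Lam choose lam) - 1) choose K"

definition A_term :: "nat \<Rightarrow> nat \<Rightarrow> nat \<Rightarrow> nat \<Rightarrow> real" where
  "A_term K Lam lam t =
     real K / real (ensemble_size K Lam lam) * real ((Lam - t) choose lam) *
     (1 - 1 / real ((t + lam) choose lam))"

definition LB_x :: "nat \<Rightarrow> nat \<Rightarrow> nat \<Rightarrow> real" where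
  "LB_x N Lam t = real t * real N / real Lam"

definition LB_y :: "nat \<Rightarrow> nat \<Rightarrow> nat \<Rightarrow> nat \<Rightarrow> real" where
  "LB_y K Lam lam t =
     real K * real (Lam choose (t + lam)) / (real (Lam choose lam) * real (Lam choose t))
     + A_term K Lam lam t"

definition R_avg_LB :: "nat \<Rightarrow> nat \<Rightarrow> nat \<Rightarrow> nat \<Rightarrow> real \<Rightarrow> real" where
  "R_avg_LB N K Lam lam M = pl_interp (LB_x N Lam) (LB_y K Lam lam) (Lam - lam + 1) M"

end

theory Submission
  imports Defs "HOL-Combinatorics.Permutations" "HOL-Library.Multiset"
begin


lemma core_bound:
  fixes r :: "nat \<Rightarrow> nat"
  assumes ds: "delivery_scheme K N B pl conn enc len" and d: "d \<in> demands K N"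
    and inj: "inj_on d {..<K}"
  shows "card {(n,i). \<exists>u<K. n = d u \<and> i < B \<and> (\<forall>w<K. r w \<le> r u \<longrightarrow> pl n i \<inter> conn w = {})} \<le> len d"
proof -
  define S where "S = {(n,i). \<exists>u<K. n = d u \<and> i < B \<and> (\<forall>w<K. r w \<le> r u \<longrightarrow> pl n i \<inter> conn w = {})}"
  have dN: "\<And>u. u < K \<Longrightarrow> d u < N" using d by (auto simp: demands_def PiE_def Pi_def)
  have Ssub: "S \<subseteq> {..<N} \<times> {..<B}" using dN by (auto simp: S_def)
  hence finS: "finite S" by (rule finite_subset) auto
  define \<phi> where "\<phi> = (\<lambda>A n i. (n,i) \<in> (A::(nat\<times>nat) set))"
  have valid: "valid_lib N B (\<phi> A)" if "A \<subseteq> S" for A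
    using that Ssub unfolding valid_lib_def \<phi>_def by blast
  have lenok: "length (enc d (\<phi> A)) = len d" if "A \<subseteq> S" for A
    using ds d valid[OF that] unfolding delivery_scheme_def by blast
  have inj2: "inj_on (\<lambda>A. enc d (\<phi> A)) (Pow S)"
  proof (rule inj_onI)
    fix A A' assume A: "A \<in> Pow S" and A': "A' \<in> Pow S" and eq: "enc d (\<phi> A) = enc d (\<phi> A')"
    define W where "W = \<phi> A"
    define W' where "W' = \<phi> A'"
    have vW: "valid_lib N B W" "valid_lib N B W'" using valid A A' by (auto simp: W_def W'_def)
    have key: "\<forall>u<K. r u = v \<longrightarrow> W (d u) = W' (d u)" for v
    proof (induction v rule: less_induct)
      case (less v)
      show ?case
      proof (intro allI impI)
        fix u assume u: "u < K" and rv: "r u = v"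
        obtain dec :: "bool list \<Rightarrow> library \<Rightarrow> nat \<Rightarrow> bool" where
          dec: "\<And>W. valid_lib N B W \<Longrightarrow> (\<forall>i<B. dec (enc d W) (cache_view N B pl (conn u) W) i = W (d u) i)"
          using ds d u unfolding delivery_scheme_def by blast
        have views: "cache_view N B pl (conn u) W = cache_view N B pl (conn u) W'"
        proof (rule ext, rule ext)
          fix n i
          show "cache_view N B pl (conn u) W n i = cache_view N B pl (conn u) W' n i"
          proof (cases "n < N \<and> i < B \<and> pl n i \<inter> conn u \<noteq> {}")
            case True
            show ?thesis
            proof (cases "(n,i) \<in> S")
              case inS: True
              then obtain w where w: "w < K" "n = d w" "\<forall>w'<K. r w' \<le> r w \<longrightarrow> pl n i \<inter> conn w' = {}"
                by (auto simp: S_def)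
              have "r w < r u"
              proof (rule ccontr)
                assume "\<not> r w < r u"
                hence "r u \<le> r w" by simp
                with w(3) u have "pl n i \<inter> conn u = {}" by blast
                with True show False by blast
              qed
              hence "W (d w) = W' (d w)" using less.IH[of "r w"] rv w(1) by blast
              thus ?thesis using w(2) by (simp add: cache_view_def)
            next
              case False
              hence "(n,i) \<notin> A" "(n,i) \<notin> A'" using A A' by auto
              thus ?thesis by (simp add: cache_view_def W_def W'_def \<phi>_def)
            qed
          next
            case False
            thus ?thesis unfolding cache_view_def by presburger
          qed
        qed
        show "W (d u) = W' (d u)"
        proof (rule ext)
          fix i show "W (d u) i = W' (d u) i"
          proof (cases "i < B")
            case True
            have "W (d u) i = dec (enc d W) (cache_view N B pl (conn u) W) i" using dec[OF vW(1)] True by simp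
            also have "\<dots> = dec (enc d W') (cache_view N B pl (conn u) W') i" using eq views by (simp add: W_def W'_def)
            also have "\<dots> = W' (d u) i" using dec[OF vW(2)] True by simp
            finally show ?thesis .
          next
            case False
            thus ?thesis using vW unfolding valid_lib_def by auto
          qed
        qed
      qed
    qed
    have "W = W'"
    proof (rule ext, rule ext)
      fix n i
      show "W n i = W' n i"
      proof (cases "(n,i) \<in> S")
        case True
        then obtain w where "w < K" "n = d w" by (auto simp: S_def)
        thus ?thesis using key by auto
      next
        case False
        hence "(n,i) \<notin> A" "(n,i) \<notin> A'" using A A' by auto
        thus ?thesis by (simp add: W_def W'_def \<phi>_def)
      qed
    qed
    hence "\<phi> A = \<phi> A'" by (simp add: W_def W'_def)
    thus "A = A'" unfolding \<phi>_def by (metis (mono_tags) set_eqI case_prod_conv surj_pair)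
  qed
  have img: "(\<lambda>A. enc d (\<phi> A)) ` Pow S \<subseteq> {xs. set xs \<subseteq> (UNIV::bool set) \<and> length xs = len d}"
    using lenok by auto
  have "card (Pow S) \<le> card {xs. set xs \<subseteq> (UNIV::bool set) \<and> length xs = len d}"
    by (rule card_inj_on_le[OF inj2 img]) (use finite_lists_length_eq[of "UNIV::bool set" "len d"] in simp)
  hence "(2::nat) ^ card S \<le> 2 ^ len d" using finS card_lists_length_eq[of "UNIV::bool set" "len d"] by (simp add: card_Pow)
  hence "card S \<le> len d" by simp
  thus ?thesis by (simp add: S_def)
qed



lemma discrete_ivt:
  fixes f :: "nat \<Rightarrow> nat"
  assumes "f 0 \<le> k" "k \<le> f n" "\<And>i. f (Suc i) \<le> Suc (f i)"
  shows "\<exists>i. f i = k"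
  using assms(1,2)
proof (induction n)
  case 0 thus ?case by auto
next
  case (Suc n)
  show ?case
  proof (cases "k \<le> f n")
    case True thus ?thesis using Suc by auto
  next
    case False
    hence "f (Suc n) = k" using Suc.prems assms(3)[of n] by linarith
    thus ?thesis by blast
  qed
qed

lemma threshold_exists:
  fixes Z :: "nat set"
  assumes "finite Z" "k \<le> card Z"
  shows "\<exists>\<theta>. card {z\<in>Z. z < \<theta>} = k"
proof (cases "Z = {}")
  case True thus ?thesis using assms by auto
next
  case False
  define f where "f \<theta> = card {z\<in>Z. z < \<theta>}" for \<theta>
  have "f 0 \<le> k" by (simp add: f_def)
  moreover have "{z\<in>Z. z < Suc (Max Z)} = Z" using assms(1) False
    by (auto simp: le_imp_less_Suc)
  hence "k \<le> f (Suc (Max Z))" using assms by (simp add: f_def)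
  moreover have "f (Suc i) \<le> Suc (f i)" for i
  proof -
    have "{z\<in>Z. z < Suc i} \<subseteq> insert i {z\<in>Z. z < i}" by auto
    hence "card {z\<in>Z. z < Suc i} \<le> card (insert i {z\<in>Z. z < i})"
      by (intro card_mono) (use assms(1) in auto)
    also have "\<dots> \<le> Suc (card {z\<in>Z. z < i})" by (simp add: card_insert_le_m1)
    finally show ?thesis by (simp add: f_def)
  qed
  ultimately show ?thesis using discrete_ivt[of f k] unfolding f_def by blast
qed

definition before :: "(nat \<Rightarrow> nat) \<Rightarrow> nat set \<Rightarrow> nat set \<Rightarrow> bool" where
  "before p U T \<longleftrightarrow> (\<forall>x\<in>U. \<forall>y\<in>T. p x < p y)"

lemma perm_count:
  fixes S U T :: "nat set"
  assumes finS: "finite S" and US: "U \<subseteq> S" and TS: "T \<subseteq> S" and disj: "U \<inter> T = {}"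
  shows "card {p. p permutes S \<and> before p U T} * (card (U \<union> T) choose card U) = fact (card S)"
proof -
  define A where "A = U \<union> T"
  define k where "k = card U"
  have finA: "finite A" using finS US TS by (auto simp: A_def intro: finite_subset)
  have AS: "A \<subseteq> S" using US TS by (auto simp: A_def)
  have finU: "finite U" using finA by (auto simp: A_def intro: finite_subset)
  have TA: "T = A - U" using disj by (auto simp: A_def)
  define F where "F = {U'. U' \<subseteq> A \<and> card U' = k}"
  define E where "E U' = {p. p permutes S \<and> before p U' (A - U')}" for U'
  have cardF: "card F = card A choose k" unfolding F_def by (rule n_subsets[OF finA])
  have UF: "U \<in> F" by (auto simp: F_def A_def k_def)
  have sameE: "card (E U') = card (E U)" if "U' \<in> F" for U'
  proof -
    have U'A: "U' \<subseteq> A" and cU': "card U' = k" using that by (auto simp: F_def)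
    have finU': "finite U'" using U'A finA by (rule finite_subset)
    obtain g1 where g1: "bij_betw g1 U' U" using finite_same_card_bij[OF finU' finU] cU' k_def by auto
    have cd: "card (A - U') = card (A - U)" using cU' k_def U'A finA
      by (simp add: card_Diff_subset finU' A_def)
    obtain g2 where g2: "bij_betw g2 (A - U') (A - U)"
      using finite_same_card_bij[of "A - U'" "A - U"] finA cd by auto
    define f where "f x = (if x \<in> U' then g1 x else if x \<in> A then g2 x else x)" for x
    have "bij_betw f U' U" using g1 by (rule bij_betw_cong[THEN iffD1, rotated]) (auto simp: f_def)
    moreover have "bij_betw f (A - U') (A - U)" using g2
      by (rule bij_betw_cong[THEN iffD1, rotated]) (auto simp: f_def)
    ultimately have "bij_betw f (U' \<union> (A - U')) (U \<union> (A - U))"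
      by (rule bij_betw_combine) auto
    moreover have "U' \<union> (A - U') = A" "U \<union> (A - U) = A" using U'A by (auto simp: A_def)
    ultimately have bA: "bij_betw f A A" by simp
    have fpA: "f permutes A" by (rule bij_imp_permutes[OF bA]) (auto simp: f_def U'A[THEN subsetD])
    hence fp: "f permutes S" using AS by (rule permutes_subset)
    have fU': "f ` U' = U" using \<open>bij_betw f U' U\<close> by (simp add: bij_betw_def)
    have fAU': "f ` (A - U') = A - U" using \<open>bij_betw f (A - U') (A - U)\<close> by (simp add: bij_betw_def)
    have "bij_betw (\<lambda>p. p \<circ> f) (E U) (E U')"
    proof (rule bij_betwI[where g = "\<lambda>p. p \<circ> inv f"])
      show "(\<lambda>p. p \<circ> f) \<in> E U \<rightarrow> E U'"
      proof
        fix p assume "p \<in> E U"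
        hence pp: "p permutes S" and bp: "before p U (A - U)" by (auto simp: E_def)
        have "before (p \<circ> f) U' (A - U')"
          unfolding before_def using bp fU' fAU' unfolding before_def by auto
        thus "p \<circ> f \<in> E U'" using permutes_compose[OF fp pp] by (auto simp: E_def)
      qed
      show "(\<lambda>p. p \<circ> inv f) \<in> E U' \<rightarrow> E U"
      proof
        fix p assume "p \<in> E U'"
        hence pp: "p permutes S" and bp: "before p U' (A - U')" by (auto simp: E_def)
        have invf: "inv f ` U = U'" "inv f ` (A - U) = A - U'"
          using fU' fAU' image_inv_f_f[OF permutes_inj[OF fp]] by metis+
        have "before (p \<circ> inv f) U (A - U)"
          unfolding before_def using bp invf unfolding before_def by auto
        thus "p \<circ> inv f \<in> E U" using permutes_compose[OF permutes_inv[OF fp] pp] by (auto simp: E_def)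
      qed
      show "p \<circ> f \<circ> inv f = p" for p using permutes_inv_o[OF fp] by (simp add: o_assoc[symmetric])
      show "p \<circ> inv f \<circ> f = p" for p using permutes_inv_o[OF fp] by (simp add: o_assoc[symmetric])
    qed
    thus ?thesis by (simp add: bij_betw_same_card)
  qed
  have disjE: "E U' \<inter> E U'' = {}" if "U' \<in> F" "U'' \<in> F" "U' \<noteq> U''" for U' U''
  proof -
    have fin': "finite U'" "finite U''" using that finA by (auto simp: F_def intro: finite_subset)
    have "\<not> U' \<subseteq> U''"
    proof
      assume "U' \<subseteq> U''"
      moreover have "card U' = card U''" using that by (auto simp: F_def)
      ultimately have "U' = U''" using fin' by (simp add: card_subset_eq)
      with that show False by simp
    qed
    then obtain x where x: "x \<in> U'" "x \<notin> U''" by auto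
    have "\<not> U'' \<subseteq> U'"
    proof
      assume "U'' \<subseteq> U'"
      moreover have "card U' = card U''" using that by (auto simp: F_def)
      ultimately have "U'' = U'" by (intro card_subset_eq[OF fin'(1)]) auto
      with that show False by simp
    qed
    then obtain y where y: "y \<in> U''" "y \<notin> U'" by auto
    have xA: "x \<in> A" "y \<in> A" using x y that by (auto simp: F_def)
    show ?thesis
    proof (rule ccontr)
      assume "E U' \<inter> E U'' \<noteq> {}"
      then obtain p where "p \<in> E U'" "p \<in> E U''" by auto
      hence "before p U' (A - U')" "before p U'' (A - U'')" by (auto simp: E_def)
      hence "p x < p y" "p y < p x" using x y xA unfolding before_def by auto
      thus False by simp
    qed
  qed
  have cover: "{p. p permutes S} = (\<Union>U'\<in>F. E U')"
  proof
    show "(\<Union>U'\<in>F. E U') \<subseteq> {p. p permutes S}" by (auto simp: E_def)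
    show "{p. p permutes S} \<subseteq> (\<Union>U'\<in>F. E U')"
    proof
      fix p assume "p \<in> {p. p permutes S}"
      hence pp: "p permutes S" by simp
      have injA: "inj_on p A" using permutes_inj[OF pp] by (auto intro: inj_on_subset)
      have "k \<le> card (p ` A)" using card_image[OF injA] k_def finA
        by (simp add: A_def card_mono)
      then obtain \<theta> where th: "card {z \<in> p ` A. z < \<theta>} = k"
        using threshold_exists[of "p ` A" k] finA by auto
      define U' where "U' = {x\<in>A. p x < \<theta>}"
      have "p ` U' = {z \<in> p ` A. z < \<theta>}" by (auto simp: U'_def)
      moreover have "card (p ` U') = card U'" using injA by (intro card_image) (auto simp: U'_def intro: inj_on_subset)
      ultimately have "card U' = k" using th by simp
      hence "U' \<in> F" by (auto simp: F_def U'_def)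
      moreover have "before p U' (A - U')" by (auto simp: before_def U'_def)
      ultimately show "p \<in> (\<Union>U'\<in>F. E U')" using pp by (auto simp: E_def)
    qed
  qed
  have finF: "finite F" using finA unfolding F_def by simp
  have finE: "finite (E U')" for U'
    using finite_permutations[OF finS] by (rule finite_subset[rotated]) (auto simp: E_def)
  have c1: "fact (card S) = card {p. p permutes S}" using card_permutations[OF refl finS] by simp
  have c2: "card {p. p permutes S} = (\<Sum>U'\<in>F. card (E U'))" unfolding cover
  proof (rule card_UN_disjoint[OF finF])
    show "\<forall>i\<in>F. finite (E i)" using finE by simp
    show "\<forall>i\<in>F. \<forall>j\<in>F. i \<noteq> j \<longrightarrow> E i \<inter> E j = {}" using disjE by simp
  qed
  have c3: "(\<Sum>U'\<in>F. card (E U')) = (\<Sum>U'\<in>F. card (E U))" by (rule sum.cong) (use sameE in auto)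
  have c4: "(\<Sum>U'\<in>F. card (E U)) = card (E U) * (card A choose k)" using cardF by simp
  have "fact (card S) = card (E U) * (card A choose k)" using c1 c2 c3 c4 by simp
  moreover have "E U = {p. p permutes S \<and> before p U T}" using TA by (simp add: E_def)
  ultimately show ?thesis unfolding A_def k_def by simp
qed



lemma mod_shift_inj:
  fixes a s s' N :: nat
  assumes eq: "(a + s) mod N = (a + s') mod N" and "s < N" "s' < N"
  shows "s = s'"
proof -
  have aux: "x = y" if "(a + x) mod N = (a + y) mod N" "x \<le> y" "y < N" for x y :: nat
  proof -
    have "N dvd (a + y) - (a + x)" using that mod_eq_dvd_iff_nat[of "a + x" "a + y" N] by simp
    hence "N dvd y - x" by simp
    moreover have "y - x < N" using that by simp
    ultimately have "y - x = 0" using nat_dvd_not_less by (cases "y - x = 0") auto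
    thus ?thesis using that by simp
  qed
  show ?thesis
  proof (cases "s \<le> s'")
    case True thus ?thesis using aux[OF eq] assms by simp
  next
    case False thus ?thesis using aux[OF eq[symmetric]] assms by simp
  qed
qed

lemma shift_sum:
  fixes f :: "nat \<Rightarrow> nat"
  assumes "0 < N"
  shows "(\<Sum>s<N. f ((u + s) mod N)) = (\<Sum>n<N. f n)"
proof -
  have inj: "inj_on (\<lambda>s. (u + s) mod N) {..<N}"
  proof (rule inj_onI)
    fix s s' assume "s \<in> {..<N}" "s' \<in> {..<N}" "(u + s) mod N = (u + s') mod N"
    thus "s = s'" using mod_shift_inj[of u s N s'] by simp
  qed
  have img: "(\<lambda>s. (u + s) mod N) ` {..<N} = {..<N}"
    by (rule endo_inj_surj) (use assms inj in auto)
  show ?thesis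
    using sum.reindex[OF inj, of f] img by simp
qed

lemma card_pairs_sum:
  fixes N B :: nat
  shows
  "card {(n,i). n < N \<and> i < B \<and> P n i} = (\<Sum>n<N. card {i. i < B \<and> P n i})"
proof -
  have "{(n,i). n < N \<and> i < B \<and> P n i} = Sigma {..<N} (\<lambda>n. {i. i < B \<and> P n i})" by auto
  moreover have "finite {i. i < B \<and> P n i}" for n by (rule finite_subset[of _ "{..<B}"]) auto
  ultimately show ?thesis using card_SigmaI[of "{..<N}" "\<lambda>n. {i. i < B \<and> P n i}"] by simp
qed

lemma load_conn_lb:
  fixes r :: "nat \<Rightarrow> nat"
  assumes B: "0 < B" and KN: "K \<le> N" and N: "0 < N"
  shows "real (\<Sum>u<K. card {(n,i). n < N \<and> i < B \<and> (\<forall>w<K. r w \<le> r u \<longrightarrow> pl n i \<inter> conn w = {})})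
           / (real N * real B) \<le> load_conn K N B pl conn"
proof -
  define Q where "Q u T = (\<forall>w<K. r w \<le> r u \<longrightarrow> T \<inter> conn w = {})" for u T
  define tot where "tot = (\<Sum>u<K. card {(n,i). n < N \<and> i < B \<and> Q u (pl n i)})"
  define X where "X = {r. \<exists>enc len. delivery_scheme K N B pl conn enc len \<and>
                      r = real (Max (len ` demands K N)) / real B}"
  have finD: "finite (demands K N)" by (simp add: demands_def finite_PiE)
  define enc0 where "enc0 = (\<lambda>(d::nat\<Rightarrow>nat) (W::library). map (\<lambda>j. W (j div B) (j mod B)) [0..<N*B])"
  have ds0: "delivery_scheme K N B pl conn enc0 (\<lambda>_. N * B)"
    unfolding delivery_scheme_def
  proof (intro ballI conjI allI impI)
    fix d W assume "d \<in> demands K N" "valid_lib N B W"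
    show "length (enc0 d W) = N * B" by (simp add: enc0_def)
  next
    fix d u assume d: "d \<in> demands K N" and u: "u < K"
    have du: "d u < N" using d u by (auto simp: demands_def PiE_def Pi_def)
    show "\<exists>dec :: bool list \<Rightarrow> library \<Rightarrow> nat \<Rightarrow> bool. \<forall>W. valid_lib N B W \<longrightarrow>
              (\<forall>i<B. dec (enc0 d W) (cache_view N B pl (conn u) W) i = W (d u) i)"
    proof (intro exI[of _ "\<lambda>xs V i. xs ! (d u * B + i)"] allI impI)
      fix W i assume "i < B"
      have lt: "d u * B + i < N * B"
      proof -
        have "d u * B + i < d u * B + B" using \<open>i < B\<close> by simp
        also have "\<dots> = Suc (d u) * B" by simp
        also have "\<dots> \<le> N * B" using du by (intro mult_right_mono) auto
        finally show ?thesis .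
      qed
      show "enc0 d W ! (d u * B + i) = W (d u) i"
        using lt \<open>i < B\<close> by (simp add: enc0_def)
    qed
  qed
  have Xne: "X \<noteq> {}" using ds0 unfolding X_def by blast
  have lb: "real tot / (real N * real B) \<le> x" if "x \<in> X" for x
  proof -
    obtain enc len where ds: "delivery_scheme K N B pl conn enc len"
      and x: "x = real (Max (len ` demands K N)) / real B" using \<open>x \<in> X\<close> unfolding X_def by blast
    define dd where "dd s = restrict (\<lambda>u. (u + s) mod N) {..<K}" for s
    have ddD: "dd s \<in> demands K N" for s using N by (auto simp: dd_def demands_def)
    have ddI: "inj_on (dd s) {..<K}" for s
    proof (rule inj_onI)
      fix u v assume uv: "u \<in> {..<K}" "v \<in> {..<K}" "dd s u = dd s v"
      hence "(s + u) mod N = (s + v) mod N" by (simp add: dd_def add.commute)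
      thus "u = v" using uv KN mod_shift_inj[of s u N v] by simp
    qed
    have cardS: "card {(n,i). \<exists>u<K. n = dd s u \<and> i < B \<and> (\<forall>w<K. r w \<le> r u \<longrightarrow> pl n i \<inter> conn w = {})}
        = (\<Sum>u<K. card {i. i < B \<and> Q u (pl ((u + s) mod N) i)})" for s
    proof -
      have eq: "{(n,i). \<exists>u<K. n = dd s u \<and> i < B \<and> (\<forall>w<K. r w \<le> r u \<longrightarrow> pl n i \<inter> conn w = {})}
          = (\<Union>u\<in>{..<K}. (\<lambda>i. (dd s u, i)) ` {i. i < B \<and> Q u (pl (dd s u) i)})"
        by (auto simp: Q_def)
      have "card (\<Union>u\<in>{..<K}. (\<lambda>i. (dd s u, i)) ` {i. i < B \<and> Q u (pl (dd s u) i)})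
          = (\<Sum>u<K. card ((\<lambda>i. (dd s u, i)) ` {i. i < B \<and> Q u (pl (dd s u) i)}))"
      proof (rule card_UN_disjoint)
        show "\<forall>u\<in>{..<K}. \<forall>v\<in>{..<K}. u \<noteq> v \<longrightarrow>
          (\<lambda>i. (dd s u, i)) ` {i. i < B \<and> Q u (pl (dd s u) i)} \<inter> (\<lambda>i. (dd s v, i)) ` {i. i < B \<and> Q v (pl (dd s v) i)} = {}"
          using ddI[of s] unfolding inj_on_def by blast
      qed auto
      also have "\<dots> = (\<Sum>u<K. card {i. i < B \<and> Q u (pl ((u + s) mod N) i)})"
        by (intro sum.cong refl) (simp add: card_image inj_on_def dd_def)
      finally show ?thesis using eq by simp
    qed
    have "tot = (\<Sum>u<K. \<Sum>n<N. card {i. i < B \<and> Q u (pl n i)})"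
      unfolding tot_def by (intro sum.cong refl card_pairs_sum)
    also have "\<dots> = (\<Sum>u<K. \<Sum>s<N. card {i. i < B \<and> Q u (pl ((u + s) mod N) i)})"
      by (rule sum.cong[OF refl], rule shift_sum[OF N, symmetric])
    also have "\<dots> = (\<Sum>s<N. \<Sum>u<K. card {i. i < B \<and> Q u (pl ((u + s) mod N) i)})"
      by (rule sum.swap)
    also have "\<dots> \<le> (\<Sum>s<N. len (dd s))"
      by (intro sum_mono) (use core_bound[OF ds ddD ddI, where r = r] cardS in simp)
    also have "\<dots> \<le> (\<Sum>s<N. Max (len ` demands K N))"
      by (intro sum_mono Max_ge) (use finD ddD in auto)
    also have "\<dots> = N * Max (len ` demands K N)" by simp
    finally have "real tot \<le> real N * real (Max (len ` demands K N))" by (simp flip: of_nat_mult)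
    hence "real tot / (real N * real B) \<le> real N * real (Max (len ` demands K N)) / (real N * real B)"
      using B N by (intro divide_right_mono) auto
    also have "\<dots> = x" using x N by simp
    finally show ?thesis .
  qed
  have "real tot / (real N * real B) \<le> Inf X" by (rule cInf_greatest[OF Xne lb])
  thus ?thesis unfolding load_conn_def X_def tot_def Q_def by simp
qed



lemma finite_L: "finite (lam_subsets Lam lam)"
  unfolding lam_subsets_def by (rule finite_subset[of _ "Pow {..<Lam}"]) auto

lemma card_L: "card (lam_subsets Lam lam) = Lam choose lam"
  unfolding lam_subsets_def using n_subsets[of "{..<Lam}" lam] by simp

lemma ens_supp:
  assumes "b \<in> ensemble K Lam lam"
  shows "{U. 0 < b U} \<subseteq> lam_subsets Lam lam" "finite {U. 0 < b U}"
    "sum b (lam_subsets Lam lam) = K"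
proof -
  show 1: "{U. 0 < b U} \<subseteq> lam_subsets Lam lam" using assms unfolding ensemble_def by auto
  show "finite {U. 0 < b U}" using finite_subset[OF 1 finite_L] .
  show "sum b (lam_subsets Lam lam) = K" using assms unfolding ensemble_def by auto
qed

lemma size_eq_sum:
  assumes "set_mset X \<subseteq> A" "finite A"
  shows "size X = sum (count X) A"
proof -
  have "size X = sum (count X) (set_mset X)" by (simp add: size_multiset_overloaded_eq)
  also have "\<dots> = sum (count X) A"
    by (rule sum.mono_neutral_left) (use assms in \<open>auto simp: count_eq_zero_iff\<close>)
  finally show ?thesis .
qed

lemma ens_count:
  assumes "b \<in> ensemble K Lam lam"
  shows "count (Abs_multiset b) = b"
  using count_Abs_multiset[OF ens_supp(2)[OF assms]] .

lemma ens_set: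
  assumes "b \<in> ensemble K Lam lam"
  shows "set_mset (Abs_multiset b) \<subseteq> lam_subsets Lam lam"
proof
  fix U assume "U \<in># Abs_multiset b"
  hence "0 < count (Abs_multiset b) U" by simp
  hence "0 < b U" by (simp only: ens_count[OF assms])
  thus "U \<in> lam_subsets Lam lam" using ens_supp(1)[OF assms] by blast
qed

lemma ens_bij:
  "bij_betw Abs_multiset (ensemble K Lam lam) (multisets_of_size (lam_subsets Lam lam) K)"
proof (rule bij_betw_byWitness[where f' = count])
  show "\<forall>b\<in>ensemble K Lam lam. count (Abs_multiset b) = b"
    using ens_count by blast
  show "\<forall>X\<in>multisets_of_size (lam_subsets Lam lam) K. Abs_multiset (count X) = X"
    using count_inverse by blast
  show "Abs_multiset ` ensemble K Lam lam \<subseteq> multisets_of_size (lam_subsets Lam lam) K"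
  proof
    fix X assume "X \<in> Abs_multiset ` ensemble K Lam lam"
    then obtain b where b: "b \<in> ensemble K Lam lam" "X = Abs_multiset b" by auto
    have sX: "set_mset X \<subseteq> lam_subsets Lam lam" using ens_set[OF b(1)] b(2) by simp
    have "size X = sum (count X) (lam_subsets Lam lam)" by (rule size_eq_sum[OF sX finite_L])
    also have "\<dots> = sum b (lam_subsets Lam lam)" using ens_count[OF b(1)] b(2) by simp
    also have "\<dots> = K" by (rule ens_supp(3)[OF b(1)])
    finally show "X \<in> multisets_of_size (lam_subsets Lam lam) K" using sX
      by (simp add: multisets_of_size_def)
  qed
  show "count ` multisets_of_size (lam_subsets Lam lam) K \<subseteq> ensemble K Lam lam"
  proof
    fix b assume "b \<in> count ` multisets_of_size (lam_subsets Lam lam) K"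
    then obtain X where X: "set_mset X \<subseteq> lam_subsets Lam lam" "size X = K" "b = count X"
      by (auto simp: multisets_of_size_def)
    have "\<forall>U. U \<notin> lam_subsets Lam lam \<longrightarrow> b U = 0"
    proof (intro allI impI)
      fix U assume "U \<notin> lam_subsets Lam lam"
      hence "U \<notin># X" using X(1) by blast
      thus "b U = 0" using X(3) by (simp add: count_eq_zero_iff)
    qed
    moreover have "sum b (lam_subsets Lam lam) = K" using size_eq_sum[OF X(1) finite_L] X(2,3) by simp
    ultimately show "b \<in> ensemble K Lam lam" by (simp add: ensemble_def)
  qed
qed

lemma finite_ens: "finite (ensemble K Lam lam)"
  using bij_betw_finite[OF ens_bij] finite_multisets_of_size[OF finite_L] by blast

lemma card_ens: "card (ensemble K Lam lam) = ensemble_size K Lam lam"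
proof -
  have "card (ensemble K Lam lam) = card (multisets_of_size (lam_subsets Lam lam) K)"
    using bij_betw_same_card[OF ens_bij] .
  also have "\<dots> = (card (lam_subsets Lam lam) + K - 1) choose K"
    by (rule card_multisets_of_size[OF finite_L])
  finally show ?thesis by (simp add: card_L ensemble_size_def add.commute)
qed

lemma realizes_ex:
  assumes "b \<in> ensemble K Lam lam"
  shows "\<exists>conn. realizes K b conn"
proof -
  define X where "X = Abs_multiset b"
  have cX: "count X = b" unfolding X_def by (rule ens_count[OF assms])
  have sX: "set_mset X \<subseteq> lam_subsets Lam lam" unfolding X_def by (rule ens_set[OF assms])
  have "size X = sum (count X) (lam_subsets Lam lam)" by (rule size_eq_sum[OF sX finite_L])
  hence szX: "size X = K" using cX ens_supp(3)[OF assms] by simp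
  obtain xs where xs: "mset xs = X" using ex_mset by blast
  have len: "length xs = K" using xs szX by (metis size_mset)
  have "card {u. u < K \<and> xs ! u = U} = b U" for U
  proof -
    have "b U = count (mset xs) U" using xs cX by simp
    also have "\<dots> = length (filter ((=) U) xs)" by (simp add: count_mset count_list_eq_length_filter)
    also have "\<dots> = card {i. i < length xs \<and> U = xs ! i}" by (rule length_filter_conv_card)
    also have "{i. i < length xs \<and> U = xs ! i} = {u. u < K \<and> xs ! u = U}" using len by auto
    finally show ?thesis by simp
  qed
  thus ?thesis unfolding realizes_def by blast
qed

lemma realize_sum:
  fixes f :: "nat set \<Rightarrow> 'a::comm_semiring_1"
  assumes b: "b \<in> ensemble K Lam lam" and r: "realizes K b conn"
  shows "(\<Sum>u<K. f (conn u)) = (\<Sum>U\<in>lam_subsets Lam lam. of_nat (b U) * f U)"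
proof -
  have fib: "card {u \<in> {..<K}. conn u = U} = b U" for U
  proof -
    have "{u \<in> {..<K}. conn u = U} = {u. u < K \<and> conn u = U}" by auto
    thus ?thesis using r unfolding realizes_def by simp
  qed
  have bz: "\<forall>U. U \<notin> lam_subsets Lam lam \<longrightarrow> b U = 0" using b by (simp add: ensemble_def)
  have img: "conn ` {..<K} \<subseteq> lam_subsets Lam lam"
  proof
    fix U assume "U \<in> conn ` {..<K}"
    then obtain u where u: "u < K" "conn u = U" by auto
    have ne: "{u \<in> {..<K}. conn u = U} \<noteq> {}" using u by auto
    have fi: "finite {u \<in> {..<K}. conn u = U}" by simp
    have "card {u \<in> {..<K}. conn u = U} \<noteq> 0" using ne fi by simp
    hence bU: "b U \<noteq> 0" using fib[of U] by argo
    show "U \<in> lam_subsets Lam lam"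
    proof (rule ccontr)
      assume "U \<notin> lam_subsets Lam lam"
      hence "b U = 0" using bz by simp
      thus False using bU by simp
    qed
  qed
  have "(\<Sum>u<K. f (conn u)) = (\<Sum>U\<in>conn ` {..<K}. \<Sum>u\<in>{u \<in> {..<K}. conn u = U}. f (conn u))"
    by (rule sum.image_gen) simp
  also have "\<dots> = (\<Sum>U\<in>conn ` {..<K}. of_nat (b U) * f U)"
  proof (rule sum.cong[OF refl])
    fix U assume "U \<in> conn ` {..<K}"
    have "(\<Sum>u\<in>{u \<in> {..<K}. conn u = U}. f (conn u)) = (\<Sum>u\<in>{u \<in> {..<K}. conn u = U}. f U)"
      by (rule sum.cong) auto
    also have "\<dots> = of_nat (b U) * f U" using fib[of U] by simp
    finally show "(\<Sum>u\<in>{u \<in> {..<K}. conn u = U}. f (conn u)) = of_nat (b U) * f U" .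
  qed
  also have "\<dots> = (\<Sum>U\<in>lam_subsets Lam lam. of_nat (b U) * f U)"
  proof (rule sum.mono_neutral_left[OF finite_L img])
    show "\<forall>U\<in>lam_subsets Lam lam - conn ` {..<K}. of_nat (b U) * f U = 0"
    proof
      fix U assume "U \<in> lam_subsets Lam lam - conn ` {..<K}"
      hence "{u \<in> {..<K}. conn u = U} = {}" by auto
      hence "card {u \<in> {..<K}. conn u = U} = 0" by (simp only: card.empty)
      hence "b U = 0" using fib[of U] by argo
      thus "of_nat (b U) * f U = 0" by simp
    qed
  qed
  finally show ?thesis .
qed

lemma realize_props:
  assumes b: "b \<in> ensemble K Lam lam" and r: "realizes K b conn"
  shows "\<And>u. u < K \<Longrightarrow> conn u \<in> lam_subsets Lam lam \<and> 0 < b (conn u)"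
    and "\<And>V. 0 < b V \<Longrightarrow> \<exists>w<K. conn w = V"
proof -
  have fib: "card {u \<in> {..<K}. conn u = U} = b U" for U
  proof -
    have "{u \<in> {..<K}. conn u = U} = {u. u < K \<and> conn u = U}" by auto
    thus ?thesis using r unfolding realizes_def by simp
  qed
  have bz: "\<forall>U. U \<notin> lam_subsets Lam lam \<longrightarrow> b U = 0" using b by (simp add: ensemble_def)
  show "conn u \<in> lam_subsets Lam lam \<and> 0 < b (conn u)" if u: "u < K" for u
  proof -
    have ne: "{v \<in> {..<K}. conn v = conn u} \<noteq> {}" using u by auto
    have fi: "finite {v \<in> {..<K}. conn v = conn u}" by simp
    have "card {v \<in> {..<K}. conn v = conn u} \<noteq> 0" using ne fi by simp
    hence bU: "b (conn u) \<noteq> 0" using fib[of "conn u"] by argo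
    have "conn u \<in> lam_subsets Lam lam"
    proof (rule ccontr)
      assume "conn u \<notin> lam_subsets Lam lam"
      hence "b (conn u) = 0" using bz by simp
      thus False using bU by simp
    qed
    thus ?thesis using bU by simp
  qed
  show "\<exists>w<K. conn w = V" if "0 < b V" for V
  proof (rule ccontr)
    assume "\<not> (\<exists>w<K. conn w = V)"
    hence "{u \<in> {..<K}. conn u = V} = {}" by auto
    hence "card {u \<in> {..<K}. conn u = V} = 0" by (simp only: card.empty)
    hence "b V = 0" using fib[of V] by argo
    thus False using that by simp
  qed
qed



definition cntT :: "nat \<Rightarrow> nat \<Rightarrow> (nat \<Rightarrow> nat \<Rightarrow> nat set) \<Rightarrow> nat set \<Rightarrow> nat" where
  "cntT N B pl T = card {(n,i). n < N \<and> i < B \<and> pl n i = T}"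

lemma card_partition:
  fixes N B :: nat
  assumes pl: "\<forall>n<N. \<forall>i<B. pl n i \<subseteq> {..<Lam}"
  shows "card {(n,i). n < N \<and> i < B \<and> P (pl n i)} = (\<Sum>T\<in>Pow {..<Lam}. if P T then cntT N B pl T else 0)"
proof -
  have fin: "finite {(n,i). n < N \<and> i < B \<and> pl n i = T}" for T
    by (rule finite_subset[of _ "{..<N} \<times> {..<B}"]) auto
  have eq: "{(n,i). n < N \<and> i < B \<and> P (pl n i)} =
      (\<Union>T\<in>{T\<in>Pow {..<Lam}. P T}. {(n,i). n < N \<and> i < B \<and> pl n i = T})"
    using pl by auto
  have "card (\<Union>T\<in>{T\<in>Pow {..<Lam}. P T}. {(n,i). n < N \<and> i < B \<and> pl n i = T})
      = (\<Sum>T\<in>{T\<in>Pow {..<Lam}. P T}. card {(n,i). n < N \<and> i < B \<and> pl n i = T})"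
  proof (rule card_UN_disjoint)
    show "finite {T \<in> Pow {..<Lam}. P T}" by simp
    show "\<forall>T\<in>{T \<in> Pow {..<Lam}. P T}. finite {(n,i). n < N \<and> i < B \<and> pl n i = T}" using fin by simp
    show "\<forall>T\<in>{T \<in> Pow {..<Lam}. P T}. \<forall>T'\<in>{T \<in> Pow {..<Lam}. P T}. T \<noteq> T' \<longrightarrow>
        {(n,i). n < N \<and> i < B \<and> pl n i = T} \<inter> {(n,i). n < N \<and> i < B \<and> pl n i = T'} = {}" by auto
  qed
  also have "\<dots> = (\<Sum>T\<in>Pow {..<Lam}. if P T then cntT N B pl T else 0)"
    unfolding cntT_def by (rule sum.inter_filter) simp
  finally show ?thesis using eq by simp
qed

lemma load_vec_gen:
  fixes R :: "nat set \<Rightarrow> nat" and G :: "nat set \<Rightarrow> nat set \<Rightarrow> bool"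
  assumes B: "0 < B" and KN: "K \<le> N" and N: "0 < N" and b: "b \<in> ensemble K Lam lam"
    and H: "\<And>U T V. U \<in> lam_subsets Lam lam \<Longrightarrow> 0 < b U \<Longrightarrow> G U T \<Longrightarrow> V \<in> lam_subsets Lam lam \<Longrightarrow>
              0 < b V \<Longrightarrow> R V \<le> R U \<Longrightarrow> T \<inter> V = {}"
  shows "real (\<Sum>U\<in>lam_subsets Lam lam. b U * card {(n,i). n < N \<and> i < B \<and> G U (pl n i)}) / (real N * real B)
          \<le> load_vec K N B pl b"
proof -
  define conn where "conn = (SOME conn. realizes K b conn)"
  have r: "realizes K b conn" unfolding conn_def using realizes_ex[OF b] by (rule someI_ex)
  note rp = realize_props[OF b r]
  have eq: "(\<Sum>u<K. card {(n,i). n < N \<and> i < B \<and> G (conn u) (pl n i)})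
      = (\<Sum>U\<in>lam_subsets Lam lam. b U * card {(n,i). n < N \<and> i < B \<and> G U (pl n i)})"
    using realize_sum[OF b r, of "\<lambda>U. card {(n,i). n < N \<and> i < B \<and> G U (pl n i)}"] by simp
  have le: "(\<Sum>u<K. card {(n,i). n < N \<and> i < B \<and> G (conn u) (pl n i)})
      \<le> (\<Sum>u<K. card {(n,i). n < N \<and> i < B \<and> (\<forall>w<K. R (conn w) \<le> R (conn u) \<longrightarrow> pl n i \<inter> conn w = {})})"
  proof (rule sum_mono, rule card_mono)
    fix u assume "u \<in> {..<K}"
    hence u: "u < K" by simp
    show "finite {(n,i). n < N \<and> i < B \<and> (\<forall>w<K. R (conn w) \<le> R (conn u) \<longrightarrow> pl n i \<inter> conn w = {})}"
      by (rule finite_subset[of _ "{..<N} \<times> {..<B}"]) auto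
    show "{(n,i). n < N \<and> i < B \<and> G (conn u) (pl n i)}
       \<subseteq> {(n,i). n < N \<and> i < B \<and> (\<forall>w<K. R (conn w) \<le> R (conn u) \<longrightarrow> pl n i \<inter> conn w = {})}"
    proof -
      have imp: "\<forall>w<K. R (conn w) \<le> R (conn u) \<longrightarrow> T \<inter> conn w = {}" if gT: "G (conn u) T" for T
      proof (intro allI impI)
        fix w assume a: "w < K" "R (conn w) \<le> R (conn u)"
        have cu: "conn u \<in> lam_subsets Lam lam" "0 < b (conn u)" using rp(1)[OF u] by auto
        have cw: "conn w \<in> lam_subsets Lam lam" "0 < b (conn w)" using rp(1)[OF a(1)] by auto
        show "T \<inter> conn w = {}" by (rule H[OF cu gT cw a(2)])
      qed
      show ?thesis using imp by auto
    qed
  qed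
  have "load_conn K N B pl conn \<ge> real (\<Sum>u<K. card {(n,i). n < N \<and> i < B \<and> (\<forall>w<K. R (conn w) \<le> R (conn u) \<longrightarrow> pl n i \<inter> conn w = {})}) / (real N * real B)"
    by (rule load_conn_lb[OF B KN N])
  moreover have "load_vec K N B pl b = load_conn K N B pl conn" by (simp add: load_vec_def conn_def)
  ultimately show ?thesis using le eq B N
    by (smt (verit, ccfv_SIG) divide_right_mono of_nat_0_le_iff of_nat_mono mult_nonneg_nonneg)
qed

lemma geom_lt: "(\<Sum>j<n. (2::nat) ^ j) < 2 ^ n"
  by (induction n) auto

lemma rk_less:
  fixes p :: "nat \<Rightarrow> nat"
  assumes inj: "inj_on p U" and fU: "finite U" and xV: "x \<in> V" and fV: "finite V"
    and lt: "\<forall>y\<in>U. p y < p x"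
  shows "(\<Sum>y\<in>U. (2::nat) ^ p y) < (\<Sum>y\<in>V. 2 ^ p y)"
proof -
  have "(\<Sum>y\<in>U. (2::nat) ^ p y) = (\<Sum>j\<in>p ` U. 2 ^ j)" using sum.reindex[OF inj, of "\<lambda>j. (2::nat) ^ j"] by simp
  also have "\<dots> \<le> (\<Sum>j<p x. 2 ^ j)" by (rule sum_mono2) (use lt in auto)
  also have "\<dots> < 2 ^ p x" by (rule geom_lt)
  also have "\<dots> \<le> (\<Sum>y\<in>V. 2 ^ p y)" using member_le_sum[OF xV, of "\<lambda>y. (2::nat) ^ p y"] fV by simp
  finally show ?thesis .
qed

lemma L_props:
  assumes "U \<in> lam_subsets Lam lam"
  shows "U \<subseteq> {..<Lam}" "finite U" "card U = lam"
  using assms unfolding lam_subsets_def by (auto intro: finite_subset[of _ "{..<Lam}"])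

lemma perm_bound:
  assumes B: "0 < B" and KN: "K \<le> N" and N: "0 < N" and b: "b \<in> ensemble K Lam lam"
    and p: "p permutes {..<Lam}" and pl: "\<forall>n<N. \<forall>i<B. pl n i \<subseteq> {..<Lam}"
  shows "(\<Sum>U\<in>lam_subsets Lam lam. real (b U) * (\<Sum>T\<in>Pow {..<Lam}.
            if U \<inter> T = {} \<and> before p U T then real (cntT N B pl T) else 0))
          \<le> load_vec K N B pl b * (real N * real B)"
proof -
  define G where "G U T = (U \<inter> T = {} \<and> before p U T)" for U T
  define R where "R V = (\<Sum>y\<in>V. (2::nat) ^ p y)" for V
  have H: "T \<inter> V = {}" if U: "U \<in> lam_subsets Lam lam" and g: "G U T" and V: "V \<in> lam_subsets Lam lam"
    and le: "R V \<le> R U" for U T V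
  proof (rule ccontr)
    assume "T \<inter> V \<noteq> {}"
    then obtain x where x: "x \<in> T" "x \<in> V" by auto
    have lt: "\<forall>y\<in>U. p y < p x" using g x(1) unfolding G_def before_def by auto
    have "R U < R V" unfolding R_def
      by (rule rk_less[OF inj_on_subset[OF permutes_inj[OF p]] L_props(2)[OF U] x(2) L_props(2)[OF V] lt]) simp
    thus False using le by simp
  qed
  have main: "real (\<Sum>U\<in>lam_subsets Lam lam. b U * card {(n,i). n < N \<and> i < B \<and> G U (pl n i)}) / (real N * real B)
          \<le> load_vec K N B pl b"
    by (rule load_vec_gen[OF B KN N b, where R = R]) (rule H, assumption+)
  have eq: "real (\<Sum>U\<in>lam_subsets Lam lam. b U * card {(n,i). n < N \<and> i < B \<and> G U (pl n i)})
     = (\<Sum>U\<in>lam_subsets Lam lam. real (b U) * (\<Sum>T\<in>Pow {..<Lam}.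
            if U \<inter> T = {} \<and> before p U T then real (cntT N B pl T) else 0))"
  proof -
    have cp: "real (card {(n,i). n < N \<and> i < B \<and> G U (pl n i)}) = (\<Sum>T\<in>Pow {..<Lam}.
            if U \<inter> T = {} \<and> before p U T then real (cntT N B pl T) else 0)" for U
      using card_partition[OF pl, of "\<lambda>T. U \<inter> T = {} \<and> before p U T"]
      by (simp add: G_def of_nat_sum if_distrib cong: if_cong)
    show ?thesis by (simp only: of_nat_sum of_nat_mult cp)
  qed
  show ?thesis using main eq B N by (simp add: divide_le_eq)
qed

lemma perm_card_real:
  assumes U: "U \<in> lam_subsets Lam lam" and T: "T \<subseteq> {..<Lam}" and d: "U \<inter> T = {}"
  shows "real (card {p. p permutes {..<Lam} \<and> before p U T}) = fact Lam / real ((card T + lam) choose lam)"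
proof -
  have fT: "finite T" using T by (rule finite_subset) simp
  have cU: "card (U \<union> T) = card T + lam" using card_Un_disjoint[OF L_props(2)[OF U] fT d] L_props(3)[OF U] by simp
  have pc: "card {p. p permutes {..<Lam} \<and> before p U T} * ((card T + lam) choose lam) = fact Lam"
    using perm_count[OF finite_lessThan L_props(1)[OF U] T d] cU L_props(3)[OF U] by simp
  have pos: "0 < ((card T + lam) choose lam)" by simp
  have "real (card {p. p permutes {..<Lam} \<and> before p U T}) * real ((card T + lam) choose lam) = fact Lam"
    using pc by (metis of_nat_fact of_nat_mult)
  thus ?thesis using pos by (simp add: eq_divide_eq)
qed

lemma avg_bound:
  assumes B: "0 < B" and KN: "K \<le> N" and N: "0 < N" and b: "b \<in> ensemble K Lam lam"
    and pl: "\<forall>n<N. \<forall>i<B. pl n i \<subseteq> {..<Lam}"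
  shows "(\<Sum>U\<in>lam_subsets Lam lam. real (b U) * (\<Sum>T\<in>Pow {..<Lam}.
            if U \<inter> T = {} then real (cntT N B pl T) / real ((card T + lam) choose lam) else 0))
          \<le> load_vec K N B pl b * (real N * real B)"
proof -
  define P where "P = {p. p permutes {..<Lam}}"
  define f where "f p U T = (if U \<inter> T = {} \<and> before p U T then real (cntT N B pl T) else 0)" for p U T
  define Y where "Y p = (\<Sum>U\<in>lam_subsets Lam lam. real (b U) * (\<Sum>T\<in>Pow {..<Lam}. f p U T))" for p
  define Z where "Z = (\<Sum>U\<in>lam_subsets Lam lam. real (b U) * (\<Sum>T\<in>Pow {..<Lam}.
            if U \<inter> T = {} then real (cntT N B pl T) / real ((card T + lam) choose lam) else 0))"
  have finP: "finite P" unfolding P_def by (rule finite_permutations) simp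
  have cardP: "card P = fact Lam" unfolding P_def by (rule card_permutations) simp_all
  have Yle: "Y p \<le> load_vec K N B pl b * (real N * real B)" if "p \<in> P" for p
    using perm_bound[OF B KN N b _ pl, of p] that unfolding Y_def f_def P_def by simp
  have inner: "(\<Sum>p\<in>P. f p U T) = fact Lam * (if U \<inter> T = {} then real (cntT N B pl T) / real ((card T + lam) choose lam) else 0)"
    if U: "U \<in> lam_subsets Lam lam" and T: "T \<in> Pow {..<Lam}" for U T
  proof (cases "U \<inter> T = {}")
    case True
    have "(\<Sum>p\<in>P. f p U T) = (\<Sum>p\<in>P. if before p U T then real (cntT N B pl T) else 0)"
      by (simp add: f_def True)
    also have "\<dots> = (\<Sum>p\<in>{p\<in>P. before p U T}. real (cntT N B pl T))"
      by (rule sum.inter_filter[OF finP, symmetric])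
    also have "\<dots> = real (card {p\<in>P. before p U T}) * real (cntT N B pl T)" by simp
    also have "{p\<in>P. before p U T} = {p. p permutes {..<Lam} \<and> before p U T}" by (simp add: P_def)
    also have "real (card \<dots>) = fact Lam / real ((card T + lam) choose lam)"
      using perm_card_real[OF U _ True] T by simp
    finally show ?thesis using True by simp
  next
    case False thus ?thesis by (simp add: f_def)
  qed
  have "(\<Sum>p\<in>P. Y p) = (\<Sum>U\<in>lam_subsets Lam lam. \<Sum>p\<in>P. real (b U) * (\<Sum>T\<in>Pow {..<Lam}. f p U T))"
    unfolding Y_def by (rule sum.swap)
  also have "\<dots> = (\<Sum>U\<in>lam_subsets Lam lam. real (b U) * (\<Sum>p\<in>P. \<Sum>T\<in>Pow {..<Lam}. f p U T))"
    by (simp add: sum_distrib_left)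
  also have "\<dots> = (\<Sum>U\<in>lam_subsets Lam lam. real (b U) * (\<Sum>T\<in>Pow {..<Lam}. \<Sum>p\<in>P. f p U T))"
    by (rule sum.cong[OF refl], subst sum.swap, rule refl)
  also have "\<dots> = (\<Sum>U\<in>lam_subsets Lam lam. real (b U) * (\<Sum>T\<in>Pow {..<Lam}. fact Lam *
       (if U \<inter> T = {} then real (cntT N B pl T) / real ((card T + lam) choose lam) else 0)))"
    by (intro sum.cong refl arg_cong2[where f = "(*)"]) (simp add: inner)
  also have "\<dots> = fact Lam * Z" unfolding Z_def by (simp add: sum_distrib_left mult_ac)
  finally have eq: "(\<Sum>p\<in>P. Y p) = fact Lam * Z" .
  have "(\<Sum>p\<in>P. Y p) \<le> (\<Sum>p\<in>P. load_vec K N B pl b * (real N * real B))" by (rule sum_mono) (rule Yle)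
  also have "\<dots> = fact Lam * (load_vec K N B pl b * (real N * real B))" using cardP by simp
  finally have "fact Lam * Z \<le> fact Lam * (load_vec K N B pl b * (real N * real B))" using eq by simp
  hence "Z \<le> load_vec K N B pl b * (real N * real B)" by (simp add: mult_le_cancel_left_pos)
  thus ?thesis unfolding Z_def .
qed

lemma single_bound:
  assumes B: "0 < B" and KN: "K \<le> N" and N: "0 < N" and b: "b \<in> ensemble K Lam lam"
    and pl: "\<forall>n<N. \<forall>i<B. pl n i \<subseteq> {..<Lam}" and U0: "U0 \<in> lam_subsets Lam lam"
    and bU0: "b U0 = K" and bz: "\<And>V. V \<noteq> U0 \<Longrightarrow> b V = 0"
  shows "real K * (\<Sum>T\<in>Pow {..<Lam}. if U0 \<inter> T = {} then real (cntT N B pl T) else 0)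
          \<le> load_vec K N B pl b * (real N * real B)"
proof -
  define G where "G U T = (U \<inter> T = {})" for U T :: "nat set"
  have H: "T \<inter> V = {}" if "0 < b U" "G U T" "0 < b V" for U T V
  proof -
    have "U = U0" "V = U0" using that bz by (metis less_irrefl)+
    thus ?thesis using that(2) by (auto simp: G_def)
  qed
  have main: "real (\<Sum>U\<in>lam_subsets Lam lam. b U * card {(n,i). n < N \<and> i < B \<and> G U (pl n i)}) / (real N * real B)
          \<le> load_vec K N B pl b"
    by (rule load_vec_gen[OF B KN N b, where R = "\<lambda>_. 0"]) (rule H, assumption+)
  have "(\<Sum>U\<in>lam_subsets Lam lam. b U * card {(n,i). n < N \<and> i < B \<and> G U (pl n i)})
      = (\<Sum>U\<in>lam_subsets Lam lam. if U = U0 then K * card {(n,i). n < N \<and> i < B \<and> G U0 (pl n i)} else 0)"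
    by (rule sum.cong[OF refl]) (simp add: bU0 bz)
  also have "\<dots> = K * card {(n,i). n < N \<and> i < B \<and> G U0 (pl n i)}" using U0 finite_L by simp
  finally have e1: "(\<Sum>U\<in>lam_subsets Lam lam. b U * card {(n,i). n < N \<and> i < B \<and> G U (pl n i)})
      = K * card {(n,i). n < N \<and> i < B \<and> G U0 (pl n i)}" .
  have e2: "real (card {(n,i). n < N \<and> i < B \<and> G U0 (pl n i)}) =
      (\<Sum>T\<in>Pow {..<Lam}. if U0 \<inter> T = {} then real (cntT N B pl T) else 0)"
    using card_partition[OF pl, of "\<lambda>T. U0 \<inter> T = {}"]
    by (simp add: G_def of_nat_sum if_distrib cong: if_cong)
  show ?thesis using main B N unfolding e1 by (simp add: divide_le_eq e2 flip: e2)
qed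



definition swapS :: "nat set \<Rightarrow> nat set \<Rightarrow> nat set \<Rightarrow> nat set" where
  "swapS U U' V = (if V = U then U' else if V = U' then U else V)"

lemma swapS_inv[simp]: "swapS U U' (swapS U U' V) = V"
  by (simp add: swapS_def)

lemma swapS_L:
  assumes "U \<in> lam_subsets Lam lam" "U' \<in> lam_subsets Lam lam"
  shows "bij_betw (swapS U U') (lam_subsets Lam lam) (lam_subsets Lam lam)"
  by (rule bij_betw_byWitness[where f' = "swapS U U'"]) (use assms in \<open>auto simp: swapS_def\<close>)

lemma swap_ens:
  assumes U: "U \<in> lam_subsets Lam lam" and U': "U' \<in> lam_subsets Lam lam" and b: "b \<in> ensemble K Lam lam"
  shows "b \<circ> swapS U U' \<in> ensemble K Lam lam"
proof -
  have z: "\<forall>V. V \<notin> lam_subsets Lam lam \<longrightarrow> b V = 0" using b by (simp add: ensemble_def)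
  have s: "sum b (lam_subsets Lam lam) = K" using b by (simp add: ensemble_def)
  have "\<forall>V. V \<notin> lam_subsets Lam lam \<longrightarrow> (b \<circ> swapS U U') V = 0"
  proof (intro allI impI)
    fix V assume V: "V \<notin> lam_subsets Lam lam"
    hence "swapS U U' V = V" using U U' by (auto simp: swapS_def)
    thus "(b \<circ> swapS U U') V = 0" using z V by simp
  qed
  moreover have "sum (b \<circ> swapS U U') (lam_subsets Lam lam) = K"
    using sum.reindex_bij_betw[OF swapS_L[OF U U'], of b] s by simp
  ultimately show ?thesis by (simp add: ensemble_def)
qed

lemma ens_sum_eq:
  assumes U: "U \<in> lam_subsets Lam lam" and U': "U' \<in> lam_subsets Lam lam"
  shows "(\<Sum>b\<in>ensemble K Lam lam. b U) = (\<Sum>b\<in>ensemble K Lam lam. b U')"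
proof -
  have bij: "bij_betw (\<lambda>b. b \<circ> swapS U U') (ensemble K Lam lam) (ensemble K Lam lam)"
  proof (rule bij_betw_byWitness[where f' = "\<lambda>b. b \<circ> swapS U U'"])
    show "\<forall>a\<in>ensemble K Lam lam. a \<circ> swapS U U' \<circ> swapS U U' = a" by (auto simp: fun_eq_iff)
    show "\<forall>a\<in>ensemble K Lam lam. a \<circ> swapS U U' \<circ> swapS U U' = a" by (auto simp: fun_eq_iff)
    show "(\<lambda>b. b \<circ> swapS U U') ` ensemble K Lam lam \<subseteq> ensemble K Lam lam" using swap_ens[OF U U'] by auto
    show "(\<lambda>b. b \<circ> swapS U U') ` ensemble K Lam lam \<subseteq> ensemble K Lam lam" using swap_ens[OF U U'] by auto
  qed
  have "(\<Sum>b\<in>ensemble K Lam lam. b U') = (\<Sum>b\<in>ensemble K Lam lam. (b \<circ> swapS U U') U')"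
    using sum.reindex_bij_betw[OF bij, of "\<lambda>b. b U'"] by simp
  also have "\<dots> = (\<Sum>b\<in>ensemble K Lam lam. b U)" by (simp add: swapS_def)
  finally show ?thesis by simp
qed

lemma ens_sum_sym:
  assumes U: "U \<in> lam_subsets Lam lam"
  shows "real (\<Sum>b\<in>ensemble K Lam lam. b U) * real (Lam choose lam) = real K * real (card (ensemble K Lam lam))"
proof -
  have "(\<Sum>V\<in>lam_subsets Lam lam. \<Sum>b\<in>ensemble K Lam lam. b V) = (\<Sum>b\<in>ensemble K Lam lam. \<Sum>V\<in>lam_subsets Lam lam. b V)"
    by (rule sum.swap)
  also have "\<dots> = (\<Sum>b\<in>ensemble K Lam lam. K)" by (rule sum.cong[OF refl]) (simp add: ensemble_def)
  also have "\<dots> = K * card (ensemble K Lam lam)" by simp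
  finally have e1: "(\<Sum>V\<in>lam_subsets Lam lam. \<Sum>b\<in>ensemble K Lam lam. b V) = K * card (ensemble K Lam lam)" .
  have "(\<Sum>V\<in>lam_subsets Lam lam. \<Sum>b\<in>ensemble K Lam lam. b V) = (\<Sum>V\<in>lam_subsets Lam lam. \<Sum>b\<in>ensemble K Lam lam. b U)"
    by (rule sum.cong[OF refl]) (rule ens_sum_eq[OF _ U])
  also have "\<dots> = (Lam choose lam) * (\<Sum>b\<in>ensemble K Lam lam. b U)" by (simp add: card_L)
  finally have "(Lam choose lam) * (\<Sum>b\<in>ensemble K Lam lam. b U) = K * card (ensemble K Lam lam)" using e1 by simp
  hence "real ((Lam choose lam) * (\<Sum>b\<in>ensemble K Lam lam. b U)) = real (K * card (ensemble K Lam lam))" by simp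
  thus ?thesis by (simp only: of_nat_mult mult.commute)
qed

definition single :: "nat \<Rightarrow> nat set \<Rightarrow> nat set \<Rightarrow> nat" where
  "single K U0 = (\<lambda>V. if V = U0 then K else 0)"

lemma single_ens: "U0 \<in> lam_subsets Lam lam \<Longrightarrow> single K U0 \<in> ensemble K Lam lam"
  unfolding ensemble_def single_def using finite_L by auto

lemma single_inj: "0 < K \<Longrightarrow> single K U0 = single K U1 \<Longrightarrow> U0 = U1"
  unfolding single_def by (metis less_irrefl)

lemma card_disj_L:
  assumes T: "T \<subseteq> {..<Lam}"
  shows "card {U\<in>lam_subsets Lam lam. U \<inter> T = {}} = (Lam - card T) choose lam"
proof -
  have "{U\<in>lam_subsets Lam lam. U \<inter> T = {}} = {U. U \<subseteq> {..<Lam} - T \<and> card U = lam}"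
    unfolding lam_subsets_def by auto
  moreover have "card ({..<Lam} - T) = Lam - card T"
    using T by (simp add: card_Diff_subset finite_subset)
  ultimately show ?thesis using n_subsets[of "{..<Lam} - T" lam] by simp
qed



lemma choose_ratio:
  assumes "t \<le> Lam"
  shows "real (Lam choose (t + lam)) / real (Lam choose t) = real ((Lam - t) choose lam) / real ((t + lam) choose lam)"
proof (cases "t + lam \<le> Lam")
  case True
  have "(Lam choose (t + lam)) * ((t + lam) choose t) = (Lam choose t) * ((Lam - t) choose (t + lam - t))"
    by (rule choose_mult) (use True in auto)
  hence e: "(Lam choose (t + lam)) * ((t + lam) choose lam) = (Lam choose t) * ((Lam - t) choose lam)"
    by (simp add: binomial_symmetric[of t "t + lam", simplified])
  have p1: "0 < Lam choose t" using assms by simp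
  have p2: "0 < (t + lam) choose lam" by simp
  have "real (Lam choose (t + lam)) * real ((t + lam) choose lam) = real (Lam choose t) * real ((Lam - t) choose lam)"
    using e by (metis of_nat_mult)
  thus ?thesis using p1 p2 by (simp add: field_simps)
next
  case False
  have z1: "Lam choose (t + lam) = 0" using False by simp
  have z2: "(Lam - t) choose lam = 0" using False assms by (intro binomial_eq_0) linarith
  show ?thesis unfolding z1 z2 by simp
qed

definition Yv :: "nat \<Rightarrow> nat \<Rightarrow> nat \<Rightarrow> nat \<Rightarrow> nat \<Rightarrow> real" where
  "Yv K Lam lam E t = real K * real ((Lam - t) choose lam) / (real (Lam choose lam) * real ((t + lam) choose lam))
     + real K / real E * real ((Lam - t) choose lam) * (1 - 1 / real ((t + lam) choose lam))"

lemma Yv_LB: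
  assumes "t \<le> Lam"
  shows "Yv K Lam lam (ensemble_size K Lam lam) t = LB_y K Lam lam t"
proof -
  have "real K * real (Lam choose (t + lam)) / (real (Lam choose lam) * real (Lam choose t))
      = real K * (real (Lam choose (t + lam)) / real (Lam choose t)) / real (Lam choose lam)" by simp
  also have "\<dots> = real K * real ((Lam - t) choose lam) / (real (Lam choose lam) * real ((t + lam) choose lam))"
    using choose_ratio[OF assms, of lam] by simp
  finally show ?thesis unfolding Yv_def LB_y_def A_term_def by simp
qed

lemma sum_if_const:
  assumes "finite A"
  shows "(\<Sum>x\<in>A. if P x then (a::real) else 0) = a * real (card {x\<in>A. P x})"
proof -
  have "(\<Sum>x\<in>A. if P x then (a::real) else 0) = (\<Sum>x\<in>{x\<in>A. P x}. a)"
    by (rule sum.inter_filter[OF assms, symmetric])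
  thus ?thesis by simp
qed

lemma placement_bound:
  assumes B: "0 < B" and KN: "K \<le> N" and N: "0 < N" and K0: "0 < K" and ll: "lam \<le> Lam"
    and pl: "\<forall>n<N. \<forall>i<B. pl n i \<subseteq> {..<Lam}"
  shows "(\<Sum>T\<in>Pow {..<Lam}. real (cntT N B pl T) * Yv K Lam lam (card (ensemble K Lam lam)) (card T))
           / (real N * real B)
         \<le> (\<Sum>b\<in>ensemble K Lam lam. load_vec K N B pl b) / real (card (ensemble K Lam lam))"
proof -
  define L where "L = lam_subsets Lam lam"
  define ens where "ens = ensemble K Lam lam"
  define E where "E = card ens"
  define m where "m = Lam choose lam"
  define c where "c T = real (cntT N B pl T)" for T
  define CC where "CC T = real ((card T + lam) choose lam)" for T :: "nat set"
  define h where "h T = real ((Lam - card T) choose lam)" for T :: "nat set"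
  define W where "W U = (\<Sum>T\<in>Pow {..<Lam}. if U \<inter> T = {} then c T / CC T else 0)" for U
  define X where "X U = (\<Sum>T\<in>Pow {..<Lam}. if U \<inter> T = {} then c T * (1 - 1 / CC T) else 0)" for U
  define \<phi> where "\<phi> b = (\<Sum>U\<in>L. real (b U) * W U) + (\<Sum>U0\<in>L. if b = single K U0 then real K * X U0 else 0)" for b
  have finL: "finite L" unfolding L_def by (rule finite_L)
  have finE: "finite ens" unfolding ens_def by (rule finite_ens)
  have mpos: "0 < m" unfolding m_def using ll by simp
  have Lne: "L \<noteq> {}" using card_L[of Lam lam] mpos finL unfolding L_def m_def by auto
  then obtain U1 where U1: "U1 \<in> L" by auto
  have Epos: "0 < E" unfolding E_def using single_ens[of U1 Lam lam K] U1 finE card_gt_0_iff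
    unfolding L_def ens_def by blast
  have CCpos: "0 < CC T" for T unfolding CC_def by simp
  have phi_le: "\<phi> b \<le> load_vec K N B pl b * (real N * real B)" if b: "b \<in> ens" for b
  proof (cases "\<exists>U0\<in>L. b = single K U0")
    case True
    then obtain U0 where U0: "U0 \<in> L" and bU: "b = single K U0" by blast
    have s1: "(\<Sum>U\<in>L. real (b U) * W U) = real K * W U0"
    proof -
      have "(\<Sum>U\<in>L. real (b U) * W U) = (\<Sum>U\<in>L. if U = U0 then real K * W U else 0)"
        by (rule sum.cong[OF refl]) (simp add: bU single_def)
      also have "\<dots> = real K * W U0" using U0 finL by simp
      finally show ?thesis .
    qed
    have s2: "(\<Sum>U0'\<in>L. if b = single K U0' then real K * X U0' else 0) = real K * X U0"
    proof -
      have "(\<Sum>U0'\<in>L. if b = single K U0' then real K * X U0' else 0) = (\<Sum>U0'\<in>L. if U0' = U0 then real K * X U0' else 0)"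
        by (rule sum.cong[OF refl]) (use single_inj[OF K0] bU in auto)
      also have "\<dots> = real K * X U0" using U0 finL by simp
      finally show ?thesis .
    qed
    have wx: "W U0 + X U0 = (\<Sum>T\<in>Pow {..<Lam}. if U0 \<inter> T = {} then c T else 0)"
      unfolding W_def X_def sum.distrib[symmetric]
      by (rule sum.cong[OF refl]) (use CCpos in \<open>simp add: field_simps\<close>)
    have "\<phi> b = real K * (\<Sum>T\<in>Pow {..<Lam}. if U0 \<inter> T = {} then c T else 0)"
      unfolding \<phi>_def s1 s2 wx[symmetric] by (simp add: algebra_simps)
    also have "\<dots> \<le> load_vec K N B pl b * (real N * real B)"
      using single_bound[OF B KN N b[unfolded ens_def] pl U0[unfolded L_def]] bU
      unfolding c_def by (simp add: single_def)
    finally show ?thesis .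
  next
    case False
    have s2: "(\<Sum>U0\<in>L. if b = single K U0 then real K * X U0 else 0) = 0"
      by (rule sum.neutral) (use False in auto)
    have "\<phi> b = (\<Sum>U\<in>L. real (b U) * W U)" unfolding \<phi>_def s2 by simp
    also have "\<dots> \<le> load_vec K N B pl b * (real N * real B)"
      using avg_bound[OF B KN N b[unfolded ens_def] pl] unfolding W_def c_def CC_def L_def by simp
    finally show ?thesis .
  qed
  have symm: "real (\<Sum>b\<in>ens. b U) = real K * real E / real m" if "U \<in> L" for U
    using ens_sum_sym[of U Lam lam K] that mpos unfolding L_def ens_def E_def m_def
    by (simp add: field_simps)
  have sumW: "(\<Sum>U\<in>L. W U) = (\<Sum>T\<in>Pow {..<Lam}. c T / CC T * h T)"
  proof -
    have "(\<Sum>U\<in>L. W U) = (\<Sum>T\<in>Pow {..<Lam}. \<Sum>U\<in>L. if U \<inter> T = {} then c T / CC T else 0)"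
      unfolding W_def by (rule sum.swap)
    also have "\<dots> = (\<Sum>T\<in>Pow {..<Lam}. c T / CC T * h T)"
    proof (rule sum.cong[OF refl])
      fix T assume T: "T \<in> Pow {..<Lam}"
      show "(\<Sum>U\<in>L. if U \<inter> T = {} then c T / CC T else 0) = c T / CC T * h T"
        using sum_if_const[OF finL, of "\<lambda>U. U \<inter> T = {}" "c T / CC T"] card_disj_L[of T Lam lam] T
        unfolding h_def L_def by simp
    qed
    finally show ?thesis .
  qed
  have sumX: "(\<Sum>U\<in>L. X U) = (\<Sum>T\<in>Pow {..<Lam}. c T * (1 - 1 / CC T) * h T)"
  proof -
    have "(\<Sum>U\<in>L. X U) = (\<Sum>T\<in>Pow {..<Lam}. \<Sum>U\<in>L. if U \<inter> T = {} then c T * (1 - 1 / CC T) else 0)"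
      unfolding X_def by (rule sum.swap)
    also have "\<dots> = (\<Sum>T\<in>Pow {..<Lam}. c T * (1 - 1 / CC T) * h T)"
    proof (rule sum.cong[OF refl])
      fix T assume T: "T \<in> Pow {..<Lam}"
      show "(\<Sum>U\<in>L. if U \<inter> T = {} then c T * (1 - 1 / CC T) else 0) = c T * (1 - 1 / CC T) * h T"
        using sum_if_const[OF finL, of "\<lambda>U. U \<inter> T = {}" "c T * (1 - 1 / CC T)"] card_disj_L[of T Lam lam] T
        unfolding h_def L_def by simp
    qed
    finally show ?thesis .
  qed
  have p1: "(\<Sum>b\<in>ens. \<Sum>U\<in>L. real (b U) * W U) = real K * real E / real m * (\<Sum>U\<in>L. W U)"
  proof -
    have "(\<Sum>b\<in>ens. \<Sum>U\<in>L. real (b U) * W U) = (\<Sum>U\<in>L. \<Sum>b\<in>ens. real (b U) * W U)" by (rule sum.swap)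
    also have "\<dots> = (\<Sum>U\<in>L. real (\<Sum>b\<in>ens. b U) * W U)" by (simp add: sum_distrib_right)
    also have "\<dots> = (\<Sum>U\<in>L. real K * real E / real m * W U)"
    proof (rule sum.cong[OF refl])
      fix U assume "U \<in> L"
      show "real (\<Sum>b\<in>ens. b U) * W U = real K * real E / real m * W U" using symm[OF \<open>U \<in> L\<close>] by simp
    qed
    also have "\<dots> = real K * real E / real m * (\<Sum>U\<in>L. W U)" by (simp add: sum_distrib_left)
    finally show ?thesis .
  qed
  have p2: "(\<Sum>b\<in>ens. \<Sum>U0\<in>L. if b = single K U0 then real K * X U0 else 0) = real K * (\<Sum>U\<in>L. X U)"
  proof -
    have "(\<Sum>b\<in>ens. \<Sum>U0\<in>L. if b = single K U0 then real K * X U0 else 0)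
        = (\<Sum>U0\<in>L. \<Sum>b\<in>ens. if b = single K U0 then real K * X U0 else 0)" by (rule sum.swap)
    also have "\<dots> = (\<Sum>U0\<in>L. real K * X U0)"
    proof (rule sum.cong[OF refl])
      fix U0 assume "U0 \<in> L"
      hence "single K U0 \<in> ens" unfolding L_def ens_def by (rule single_ens)
      thus "(\<Sum>b\<in>ens. if b = single K U0 then real K * X U0 else 0) = real K * X U0"
        using finE by simp
    qed
    also have "\<dots> = real K * (\<Sum>U\<in>L. X U)" by (simp add: sum_distrib_left)
    finally show ?thesis .
  qed
  have Yv_eq: "real E * Yv K Lam lam E (card T) = real K * real E / real m * (h T / CC T) + real K * (1 - 1 / CC T) * h T" for T
    unfolding Yv_def h_def CC_def using Epos mpos by (simp add: field_simps m_def)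
  have tot: "(\<Sum>b\<in>ens. \<phi> b) = real E * (\<Sum>T\<in>Pow {..<Lam}. c T * Yv K Lam lam E (card T))"
  proof -
    have "(\<Sum>b\<in>ens. \<phi> b) = real K * real E / real m * (\<Sum>U\<in>L. W U) + real K * (\<Sum>U\<in>L. X U)"
      unfolding \<phi>_def sum.distrib p1 p2 ..
    also have "\<dots> = (\<Sum>T\<in>Pow {..<Lam}. c T * (real E * Yv K Lam lam E (card T)))"
      unfolding sumW sumX Yv_eq sum_distrib_left sum.distrib[symmetric]
      by (rule sum.cong[OF refl]) (simp add: algebra_simps)
    also have "\<dots> = real E * (\<Sum>T\<in>Pow {..<Lam}. c T * Yv K Lam lam E (card T))"
      by (simp add: sum_distrib_left mult_ac)
    finally show ?thesis .
  qed
  have "real E * (\<Sum>T\<in>Pow {..<Lam}. c T * Yv K Lam lam E (card T)) \<le> (\<Sum>b\<in>ens. load_vec K N B pl b * (real N * real B))"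
    unfolding tot[symmetric] by (rule sum_mono) (rule phi_le)
  also have "\<dots> = (\<Sum>b\<in>ens. load_vec K N B pl b) * (real N * real B)" by (simp add: sum_distrib_right)
  finally have fin: "real E * (\<Sum>T\<in>Pow {..<Lam}. c T * Yv K Lam lam E (card T)) \<le> (\<Sum>b\<in>ens. load_vec K N B pl b) * (real N * real B)" .
  have NB: "0 < real N * real B" using N B by simp
  show ?thesis
    unfolding ens_def[symmetric] E_def[symmetric] c_def[symmetric]
    using fin NB Epos by (simp add: field_simps)
qed



definition good :: "(nat \<Rightarrow> real) \<Rightarrow> bool" where
  "good a \<longleftrightarrow> (\<forall>t. 0 \<le> a t \<and> a (Suc t) \<le> a t \<and> 2 * a (Suc t) \<le> a t + a (Suc (Suc t)))"

lemma good_mult: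
  assumes "good a" "good b"
  shows "good (\<lambda>t. a t * b t)"
  unfolding good_def
proof (intro allI conjI)
  fix t
  have a: "0 \<le> a t" "0 \<le> a (Suc t)" "0 \<le> a (Suc (Suc t))" "a (Suc t) \<le> a t" "a (Suc (Suc t)) \<le> a (Suc t)"
    "2 * a (Suc t) \<le> a t + a (Suc (Suc t))" using assms(1) unfolding good_def by blast+
  have b: "0 \<le> b t" "0 \<le> b (Suc t)" "0 \<le> b (Suc (Suc t))" "b (Suc t) \<le> b t" "b (Suc (Suc t)) \<le> b (Suc t)"
    "2 * b (Suc t) \<le> b t + b (Suc (Suc t))" using assms(2) unfolding good_def by blast+
  show "0 \<le> a t * b t" using a b by simp
  show "a (Suc t) * b (Suc t) \<le> a t * b t" using a b by (intro mult_mono) auto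
  have "4 * (a (Suc t) * b (Suc t)) = (2 * a (Suc t)) * (2 * b (Suc t))" by simp
  also have "\<dots> \<le> (a t + a (Suc (Suc t))) * (b t + b (Suc (Suc t)))"
    using a b by (intro mult_mono) auto
  also have "\<dots> \<le> 2 * (a t * b t + a (Suc (Suc t)) * b (Suc (Suc t)))"
  proof -
    have "0 \<le> (a t - a (Suc (Suc t))) * (b t - b (Suc (Suc t)))" using a b by simp
    thus ?thesis by (simp add: algebra_simps)
  qed
  finally show "2 * (a (Suc t) * b (Suc t)) \<le> a t * b t + a (Suc (Suc t)) * b (Suc (Suc t))" by simp
qed

lemma good_prod:
  assumes "finite J" "\<And>j. j \<in> J \<Longrightarrow> good (a j)"
  shows "good (\<lambda>t. \<Prod>j\<in>J. a j t)"
  using assms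
proof (induction J rule: finite_induct)
  case empty
  thus ?case by (simp add: good_def)
next
  case (insert x F)
  have "good (\<lambda>t. a x t * (\<Prod>j\<in>F. a j t))"
    by (rule good_mult) (use insert in auto)
  thus ?case using insert by simp
qed

lemma good_scale:
  assumes "good a" "0 \<le> c"
  shows "good (\<lambda>t. c * a t)"
proof -
  have "good (\<lambda>t. c)" using assms(2) by (simp add: good_def)
  from good_mult[OF this assms(1)] show ?thesis .
qed

lemma good_F: "good (\<lambda>t. max 0 (real L - real t - real j))"
  unfolding good_def by (auto simp: max_def)

lemma good_G: "good (\<lambda>t. 1 / (real t + 1 + real j))"
  unfolding good_def
proof (intro allI conjI)
  fix t
  define c where "c = real t + 1 + real j"
  have c: "1 \<le> c" by (simp add: c_def)
  show "0 \<le> 1 / (real t + 1 + real j)" by simp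
  show "1 / (real (Suc t) + 1 + real j) \<le> 1 / (real t + 1 + real j)"
    by (intro divide_left_mono) auto
  have p: "0 < c" "0 < c+1" "0 < c+2" using c by auto
  have d1: "1 / c - 1 / (c + 1) = 1 / (c * (c + 1))" using p by (simp add: diff_frac_eq)
  have d2: "1 / (c + 1) - 1 / (c + 2) = 1 / ((c + 1) * (c + 2))" using p by (simp add: diff_frac_eq)
  have "1 / ((c + 1) * (c + 2)) \<le> 1 / (c * (c + 1))"
    using p by (intro divide_left_mono mult_mono) auto
  hence "2 / (c + 1) \<le> 1 / c + 1 / (c + 2)" using d1 d2 by linarith
  thus "2 * (1 / (real (Suc t) + 1 + real j)) \<le> 1 / (real t + 1 + real j) + 1 / (real (Suc (Suc t)) + 1 + real j)"
    unfolding c_def by (simp add: add_ac)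
qed

lemma good_add: "good a \<Longrightarrow> good b \<Longrightarrow> good (\<lambda>t. a t + b t)"
  unfolding good_def by (auto intro: add_mono add_nonneg_nonneg) (smt (verit))

lemma choose_prod_I1: "real (n choose k) * fact k = (\<Prod>i<k. max 0 (real n - real i))"
proof -
  have "real (n choose k) * fact k = (\<Prod>i = 0..<k. real n - real i)"
  proof -
    have "real (n choose k) = (real n gchoose k)" by (rule binomial_gbinomial)
    thus ?thesis using gbinomial_mult_fact'[of "real n" k] by simp
  qed
  also have "\<dots> = (\<Prod>i<k. real n - real i)" by (simp add: atLeast0LessThan)
  also have "\<dots> = (\<Prod>i<k. max 0 (real n - real i))"
  proof (cases "k \<le> n")
    case True
    thus ?thesis by (intro prod.cong refl) auto
  next
    case False
    hence "n \<in> {..<k}" by simp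
    have z1: "(\<Prod>i<k. real n - real i) = 0"
      by (rule prod_zero) (use \<open>n \<in> {..<k}\<close> in \<open>auto intro!: bexI[of _ n]\<close>)
    have z2: "(\<Prod>i<k. max 0 (real n - real i)) = 0"
      by (rule prod_zero) (use \<open>n \<in> {..<k}\<close> in \<open>auto intro!: bexI[of _ n]\<close>)
    show ?thesis unfolding z1 z2 ..
  qed
  finally show ?thesis .
qed

lemma choose_prod_I2: "real ((t + k) choose k) * fact k = (\<Prod>j<k. real t + 1 + real j)"
proof (induction k)
  case 0 thus ?case by simp
next
  case (Suc k)
  have e: "Suc (t + k) * ((t + k) choose k) = (Suc (t + k) choose Suc k) * Suc k"
    by (rule Suc_times_binomial_eq)
  have "real ((t + Suc k) choose Suc k) * fact (Suc k) = real ((Suc (t + k) choose Suc k) * Suc k) * fact k"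
    by (simp add: algebra_simps)
  also have "\<dots> = real (Suc (t + k)) * (real ((t + k) choose k) * fact k)"
    by (subst e[symmetric]) (simp only: of_nat_mult mult_ac)
  also have "\<dots> = real (Suc (t + k)) * (\<Prod>j<k. real t + 1 + real j)" by (simp only: Suc)
  also have "\<dots> = (\<Prod>j<Suc k. real t + 1 + real j)" by (simp add: algebra_simps)
  finally show ?case .
qed

lemma maxF_eq: "max 0 (real (L - t) - real i) = max 0 (real L - real t - real i)"
  by (cases "t \<le> L") (auto simp: of_nat_diff max_def)

lemma good_h: "good (\<lambda>t. real ((L - t) choose k))"
proof -
  have e: "real ((L - t) choose k) = (1 / fact k) * (\<Prod>i<k. max 0 (real L - real t - real i))" for t
    using choose_prod_I1[of "L - t" k] by (simp add: maxF_eq field_simps)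
  have "good (\<lambda>t. (1 / fact k) * (\<Prod>i<k. max 0 (real L - real t - real i)))"
    by (intro good_scale good_prod good_F) auto
  thus ?thesis unfolding e .
qed

lemma good_u: "good (\<lambda>t. real ((L - t) choose k) / real ((t + k) choose k))"
proof -
  have e: "real ((L - t) choose k) / real ((t + k) choose k) =
      (\<Prod>i<k. max 0 (real L - real t - real i)) * (\<Prod>i<k. 1 / (real t + 1 + real i))" for t
  proof -
    have p: "0 < (\<Prod>i<k. real t + 1 + real i)" by (intro prod_pos) auto
    have "real ((L - t) choose k) / real ((t + k) choose k)
        = (real ((L - t) choose k) * fact k) / (real ((t + k) choose k) * fact k)" by simp
    also have "\<dots> = (\<Prod>i<k. max 0 (real L - real t - real i)) / (\<Prod>i<k. real t + 1 + real i)"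
    proof -
      have A: "real ((L - t) choose k) * fact k = (\<Prod>i<k. max 0 (real L - real t - real i))"
        using choose_prod_I1[of "L - t" k] by (simp add: maxF_eq)
      show ?thesis unfolding A choose_prod_I2 ..
    qed
    also have "\<dots> = (\<Prod>i<k. max 0 (real L - real t - real i)) * (\<Prod>i<k. 1 / (real t + 1 + real i))"
    proof -
      have "(\<Prod>i<k. 1 / (real t + 1 + real i)) = 1 / (\<Prod>i<k. real t + 1 + real i)"
        by (simp add: prod_dividef)
      thus ?thesis by simp
    qed
    finally show ?thesis .
  qed
  have "good (\<lambda>t. (\<Prod>i<k. max 0 (real L - real t - real i)) * (\<Prod>i<k. 1 / (real t + 1 + real i)))"
    by (intro good_mult good_prod good_F good_G) auto
  thus ?thesis unfolding e .
qed

lemma good_Yv: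
  assumes "Lam choose lam \<le> E" "0 < Lam choose lam"
  shows "good (Yv K Lam lam E)"
proof -
  define m where "m = real (Lam choose lam)"
  have mE: "m \<le> real E" "0 < m" using assms by (auto simp: m_def)
  have c1: "0 \<le> real K / m - real K / real E" using mE by (simp add: frac_le)
  have e: "Yv K Lam lam E t = (real K / m - real K / real E) * (real ((Lam - t) choose lam) / real ((t + lam) choose lam))
           + real K / real E * real ((Lam - t) choose lam)" for t
  proof -
    define h where "h = real ((Lam - t) choose lam)"
    define C where "C = real ((t + lam) choose lam)"
    have C: "C \<noteq> 0" by (simp add: C_def)
    have Enz: "real E \<noteq> 0" using mE by linarith
    have "Yv K Lam lam E t = real K * h / (m * C) + real K / real E * h * (1 - 1 / C)"
      unfolding Yv_def h_def C_def m_def ..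
    also have "\<dots> = (real K / m - real K / real E) * (h / C) + real K / real E * h"
      using C Enz mE by (simp add: field_simps)
    finally show ?thesis unfolding h_def C_def .
  qed
  have "good (\<lambda>t. (real K / m - real K / real E) * (real ((Lam - t) choose lam) / real ((t + lam) choose lam))
           + real K / real E * real ((Lam - t) choose lam))"
    by (intro good_add good_scale good_u good_h c1) simp
  thus ?thesis unfolding e[abs_def] by simp
qed



lemma good_line:
  assumes g: "good y"
  shows "y s + (real t - real s) * (y (Suc s) - y s) \<le> y t" and "y (Suc s) - y s \<le> 0"
proof -
  define D where "D i = y (Suc i) - y i" for i
  have Dm: "D i \<le> D (Suc i)" for i using g unfolding good_def D_def by (smt (verit))
  have Dmono: "D i \<le> D j" if "i \<le> j" for i j
    using that by (induction rule: dec_induct) (auto intro: order_trans Dm)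
  show "y (Suc s) - y s \<le> 0" using g unfolding good_def by (smt (verit))
  have up: "y s + real k * D s \<le> y (s + k)" for k
  proof (induction k)
    case 0 thus ?case by simp
  next
    case (Suc k)
    have "y s + real (Suc k) * D s = (y s + real k * D s) + D s" by (simp add: algebra_simps)
    also have "\<dots> \<le> y (s + k) + D (s + k)" using Suc Dmono[of s "s + k"] by simp
    also have "\<dots> = y (s + Suc k)" by (simp add: D_def)
    finally show ?case .
  qed
  have down: "k \<le> s \<Longrightarrow> y s - real k * D s \<le> y (s - k)" for k
  proof (induction k)
    case 0 thus ?case by simp
  next
    case (Suc k)
    hence IH: "y s - real k * D s \<le> y (s - k)" by simp
    have sk: "s - k = Suc (s - Suc k)" using Suc.prems by simp
    have "y s - real (Suc k) * D s = (y s - real k * D s) - D s" by (simp add: algebra_simps)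
    also have "\<dots> \<le> y (s - k) - D (s - Suc k)" using IH Dmono[of "s - Suc k" s] by simp
    also have "\<dots> = y (s - Suc k)" unfolding D_def sk by simp
    finally show ?case .
  qed
  show "y s + (real t - real s) * (y (Suc s) - y s) \<le> y t"
  proof (cases "s \<le> t")
    case True
    have "real t - real s = real (t - s)" using True by (simp add: of_nat_diff)
    thus ?thesis using up[of "t - s"] True unfolding D_def by simp
  next
    case False
    have "real t - real s = - real (s - t)" using False by (simp add: of_nat_diff)
    moreover have "s - (s - t) = t" using False by simp
    ultimately show ?thesis using down[of "s - t"] False unfolding D_def by (simp add: algebra_simps)
  qed
qed

lemma total_cnt:
  assumes pl: "\<forall>n<N. \<forall>i<B. pl n i \<subseteq> {..<Lam}"
  shows "(\<Sum>T\<in>Pow {..<Lam}. real (cntT N B pl T)) = real N * real B"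
proof -
  have "card {(n,i). n < N \<and> i < B \<and> True} = (\<Sum>T\<in>Pow {..<Lam}. if True then cntT N B pl T else 0)"
    by (rule card_partition[OF pl])
  moreover have "{(n,i). n < N \<and> i < B \<and> True} = {..<N} \<times> {..<B}" by auto
  ultimately have "N * B = (\<Sum>T\<in>Pow {..<Lam}. cntT N B pl T)" by simp
  hence "real (N * B) = real (\<Sum>T\<in>Pow {..<Lam}. cntT N B pl T)" by simp
  thus ?thesis by (simp add: of_nat_sum)
qed

lemma mem_bound:
  assumes up: "uncoded_placement Lam N M B pl"
  shows "(\<Sum>T\<in>Pow {..<Lam}. real (cntT N B pl T) * real (card T)) \<le> real Lam * (M * real B)"
proof -
  have pl: "\<forall>n<N. \<forall>i<B. pl n i \<subseteq> {..<Lam}" using up by (simp add: uncoded_placement_def)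
  have mem: "\<forall>l<Lam. real (card {(n, i). n < N \<and> i < B \<and> l \<in> pl n i}) \<le> M * real B"
    using up by (simp add: uncoded_placement_def)
  have cardT: "real (card T) = (\<Sum>l<Lam. if l \<in> T then 1 else 0)" if "T \<in> Pow {..<Lam}" for T
  proof -
    have "(\<Sum>l<Lam. if l \<in> T then (1::real) else 0) = 1 * real (card {l\<in>{..<Lam}. l \<in> T})"
      by (rule sum_if_const) simp
    moreover have "{l\<in>{..<Lam}. l \<in> T} = T" using that by auto
    ultimately show ?thesis by simp
  qed
  have "(\<Sum>T\<in>Pow {..<Lam}. real (cntT N B pl T) * real (card T))
      = (\<Sum>T\<in>Pow {..<Lam}. \<Sum>l<Lam. if l \<in> T then real (cntT N B pl T) else 0)"
    by (rule sum.cong[OF refl]) (simp add: cardT sum_distrib_left if_distrib cong: if_cong)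
  also have "\<dots> = (\<Sum>l<Lam. \<Sum>T\<in>Pow {..<Lam}. if l \<in> T then real (cntT N B pl T) else 0)"
    by (rule sum.swap)
  also have "\<dots> = (\<Sum>l<Lam. real (card {(n, i). n < N \<and> i < B \<and> l \<in> pl n i}))"
  proof (rule sum.cong[OF refl])
    fix l
    show "(\<Sum>T\<in>Pow {..<Lam}. if l \<in> T then real (cntT N B pl T) else 0) = real (card {(n, i). n < N \<and> i < B \<and> l \<in> pl n i})"
      using card_partition[OF pl, of "\<lambda>T. l \<in> T"] by (simp add: of_nat_sum if_distrib cong: if_cong)
  qed
  also have "\<dots> \<le> (\<Sum>l<Lam. M * real B)" by (rule sum_mono) (use mem in auto)
  also have "\<dots> = real Lam * (M * real B)" by simp
  finally show ?thesis .
qed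

lemma lp_bound:
  assumes up: "uncoded_placement Lam N M B pl" and N: "0 < N" and Lam1: "1 \<le> Lam"
    and lam1: "1 \<le> lam" and ll: "lam \<le> Lam"
    and Mle: "M \<le> real N * real (Lam - lam + 1) / real Lam"
    and g: "good Y" and YLB: "\<And>t. t \<le> Lam \<Longrightarrow> LB_y K Lam lam t = Y t"
  shows "R_avg_LB N K Lam lam M \<le> (\<Sum>T\<in>Pow {..<Lam}. real (cntT N B pl T) * Y (card T)) / (real N * real B)"
proof -
  have B: "0 < B" and pl: "\<forall>n<N. \<forall>i<B. pl n i \<subseteq> {..<Lam}" using up by (auto simp: uncoded_placement_def)
  define n0 where "n0 = Lam - lam + 1"
  define x where "x = LB_x N Lam"
  define s where "s = (LEAST t. t < n0 \<and> M \<le> x (Suc t))"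
  have xval: "x t = real t * real N / real Lam" for t by (simp add: x_def LB_x_def)
  have ex: "n0 - 1 < n0 \<and> M \<le> x (Suc (n0 - 1))"
    using Mle unfolding xval n0_def by (simp add: mult.commute)
  have hs: "s < n0" "M \<le> x (Suc s)" using LeastI[of "\<lambda>t. t < n0 \<and> M \<le> x (Suc t)", OF ex] unfolding s_def by auto
  have s1: "Suc s \<le> Lam" using hs(1) lam1 ll unfolding n0_def by simp
  have Lpos: "0 < real Lam" using Lam1 by simp
  have Npos: "0 < real N" using N by simp
  define D where "D = Y (Suc s) - Y s"
  have Dle: "D \<le> 0" unfolding D_def by (rule good_line(2)[OF g])
  have RLB: "R_avg_LB N K Lam lam M = Y s + (M * real Lam / real N - real s) * D"
  proof -
    have dx: "x (Suc s) - x s = real N / real Lam" unfolding xval by (simp add: field_simps add_divide_distrib)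
    have q: "(M - x s) / (x (Suc s) - x s) = M * real Lam / real N - real s"
      unfolding dx using Lpos Npos by (simp add: xval field_simps)
    have "R_avg_LB N K Lam lam M = LB_y K Lam lam s + (M - x s) / (x (Suc s) - x s) * (LB_y K Lam lam (Suc s) - LB_y K Lam lam s)"
      unfolding R_avg_LB_def pl_interp_def Let_def s_def x_def n0_def by simp
    also have "\<dots> = Y s + (M * real Lam / real N - real s) * D"
      unfolding q D_def using YLB[of s] YLB[of "Suc s"] s1 by simp
    finally show ?thesis .
  qed
  define c where "c T = real (cntT N B pl T)" for T
  have c0: "0 \<le> c T" for T by (simp add: c_def)
  have ctot: "(\<Sum>T\<in>Pow {..<Lam}. c T) = real N * real B" unfolding c_def by (rule total_cnt[OF pl])
  have cmem: "(\<Sum>T\<in>Pow {..<Lam}. c T * real (card T)) \<le> real Lam * (M * real B)"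
    unfolding c_def by (rule mem_bound[OF up])
  have "(\<Sum>T\<in>Pow {..<Lam}. c T * (Y s + (real (card T) - real s) * D)) \<le> (\<Sum>T\<in>Pow {..<Lam}. c T * Y (card T))"
    by (rule sum_mono, rule mult_left_mono) (use good_line(1)[OF g, of s] c0 D_def in auto)
  moreover have "(\<Sum>T\<in>Pow {..<Lam}. c T * (Y s + (real (card T) - real s) * D))
      = (Y s - real s * D) * (\<Sum>T\<in>Pow {..<Lam}. c T) + D * (\<Sum>T\<in>Pow {..<Lam}. c T * real (card T))"
    by (simp add: sum_distrib_left sum.distrib algebra_simps sum_subtractf)
  moreover have "D * (\<Sum>T\<in>Pow {..<Lam}. c T * real (card T)) \<ge> D * (real Lam * (M * real B))"
    using cmem Dle by (rule mult_left_mono_neg)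
  ultimately have main: "(Y s - real s * D) * (real N * real B) + D * (real Lam * (M * real B)) \<le> (\<Sum>T\<in>Pow {..<Lam}. c T * Y (card T))"
    unfolding ctot by linarith
  have NB: "0 < real N * real B" using N B by simp
  have "R_avg_LB N K Lam lam M * (real N * real B) = (Y s - real s * D) * (real N * real B) + D * (real Lam * (M * real B))"
    unfolding RLB using Npos by (simp add: field_simps)
  hence "R_avg_LB N K Lam lam M * (real N * real B) \<le> (\<Sum>T\<in>Pow {..<Lam}. c T * Y (card T))" using main by simp
  thus ?thesis using NB unfolding c_def by (simp add: le_divide_eq)
qed



theorem theorem2:
  fixes Lam lam K N :: nat and M :: real
  assumes "1 \<le> Lam" and "1 \<le> lam" and "lam \<le> Lam" and "1 \<le> K" and "K \<le> N"
    and "0 \<le> M" and "M \<le> real N * real (Lam - lam + 1) / real Lam"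
  shows "R_avg_LB N K Lam lam M \<le> R_avg_opt N K Lam lam M"
proof -
  note Lam1 = assms(1) and lam1 = assms(2) and ll = assms(3) and K1 = assms(4) and KN = assms(5)
    and M0 = assms(6) and Mle = assms(7)
  define E where "E = card (ensemble K Lam lam)"
  have N: "0 < N" using K1 KN by simp
  have K0: "0 < K" using K1 by simp
  have mpos: "0 < Lam choose lam" using ll by simp
  have mE: "Lam choose lam \<le> E"
  proof -
    have "card (lam_subsets Lam lam) \<le> card (ensemble K Lam lam)"
    proof (rule card_inj_on_le[of "single K"])
      show "inj_on (single K) (lam_subsets Lam lam)" using single_inj[OF K0] by (auto simp: inj_on_def)
      show "single K ` lam_subsets Lam lam \<subseteq> ensemble K Lam lam" using single_ens by blast
      show "finite (ensemble K Lam lam)" by (rule finite_ens)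
    qed
    thus ?thesis by (simp add: card_L E_def)
  qed
  have g: "good (Yv K Lam lam E)" by (rule good_Yv[OF mE mpos])
  have YLB: "LB_y K Lam lam t = Yv K Lam lam E t" if "t \<le> Lam" for t
    using Yv_LB[OF that, of K lam] card_ens[of K Lam lam] unfolding E_def by simp
  define X where "X = {r. \<exists>B pl. uncoded_placement Lam N M B pl \<and>
            r = (\<Sum>b\<in>ensemble K Lam lam. load_vec K N B pl b) / real (card (ensemble K Lam lam))}"
  have Xne: "X \<noteq> {}"
  proof -
    have "uncoded_placement Lam N M 1 (\<lambda>_ _. {})" using M0 by (simp add: uncoded_placement_def)
    thus ?thesis unfolding X_def by blast
  qed
  have lb: "R_avg_LB N K Lam lam M \<le> r" if "r \<in> X" for r
  proof -
    obtain B pl where up: "uncoded_placement Lam N M B pl"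
      and r: "r = (\<Sum>b\<in>ensemble K Lam lam. load_vec K N B pl b) / real (card (ensemble K Lam lam))"
      using \<open>r \<in> X\<close> unfolding X_def by blast
    have B: "0 < B" and pl: "\<forall>n<N. \<forall>i<B. pl n i \<subseteq> {..<Lam}" using up by (auto simp: uncoded_placement_def)
    have "R_avg_LB N K Lam lam M \<le> (\<Sum>T\<in>Pow {..<Lam}. real (cntT N B pl T) * Yv K Lam lam E (card T)) / (real N * real B)"
      by (rule lp_bound[OF up N Lam1 lam1 ll Mle g YLB])
    also have "\<dots> \<le> r" unfolding r E_def by (rule placement_bound[OF B KN N K0 ll pl])
    finally show ?thesis .
  qed
  have "R_avg_LB N K Lam lam M \<le> Inf X" by (rule cInf_greatest[OF Xne lb])
  thus ?thesis unfolding R_avg_opt_def X_def .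
qed

end
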